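(* Consider any instance of the rescheduling problem $(1, h_1 \mid \Delta_{\max}\le k \mid \mu\Delta_{\max} + \sum_{j=1}^n w_j C_j)$ described in the context, and suppose it admits at least one feasible schedule. Then there exists an optimal schedule $\sigma^*$ such that: (a) $C_j(\sigma^* )\le C_j(\pi^* )$ for each job $J_j$ in the earlier schedule; (b) the earlier schedule contains at most one idle period; (c) each job in the earlier schedule that is processed after the idle period is processed exactly $\Delta_{\max}(\sigma^* )$ time units earlier than in $\pi^*$, i.e. $C_j(\pi^* )-C_j(\sigma^* )=\Delta_{\max}(\sigma^* )$; (d) the jobs in the earlier schedule processed after the idle period have consecutive indices $J_i,J_{i+1},\dots,J_{i+m}$; (e) the job $J_j$ of the earlier schedule processed immediately after the idle period satisfies $S_j(\pi^* )\ge T_2$; (f) the machine does not idle in the later schedule; (g) the first job in the later schedule has the maximum time deviation $\Delta_j$ among all jobs in the later schedule.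
   Context: An instance consists of $n$ jobs $J_1,\dots,J_n$, where $J_j$ has a positive integer processing time $p_j$ and a positive integer weight $w_j$, indexed in WSPT order $p_1/w_1\le\cdots\le p_n/w_n$; integers $T_1,T_2$ with $0\le T_1<T_2$ (machine unavailable during $[T_1,T_2]$); an integer $k$; a rational $\mu\ge 0$. The original schedule $\pi^*$ processes $J_1,\dots,J_n$ in order consecutively from time $0$ without idle time, so $S_j(\pi^* )=\sum_{i<j}p_i$, $C_j(\pi^* )=\sum_{i\le j}p_i$. A schedule $\sigma$ assigns start times $S_j(\sigma)\ge0$, non-preemptive single-machine processing with $C_j(\sigma)=S_j(\sigma)+p_j$, no overlaps, and each job has $C_j(\sigma)\le T_1$ or $S_j(\sigma)\ge T_2$. $\Delta_j=|C_j(\sigma)-C_j(\pi^* )|$, $\Delta_{\max}=\max_j\Delta_j$. Feasible means $\Delta_{\max}\le k$; optimal means feasible and minimizing $\mu\Delta_{\max}+\sum_j w_jC_j(\sigma)$. The earlier schedule consists of jobs with $C_j(\sigma)\le T_1$; the later schedule of jobs completed after $T_2$. An idle period of the earlier schedule is a maximal time interval of positive length, contained in $[0,c]$ where $c$ is the largest completion time of an earlier-schedule job, during which no job is processed. The machine idles in the later schedule if some time interval of positive length within $[T_2,c']$, where $c'$ is the largest completion time of a later-schedule job, contains no processing. Standing assumptions: some job has $C_j(\pi^* )>T_1$; with $j_1$ the smallest such index, $p_{\min}\le T_1<P$ and $T_2-S_{j_1}(\pi^* )\le k$, where $p_{\min}=\min_jp_j$, $P=\sum_jp_j$. *)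

theory Defs
  imports Complex_Main
begin

definition Spi :: "(nat \<Rightarrow> nat) \<Rightarrow> nat \<Rightarrow> real" where
  "Spi p j = real (\<Sum>i\<in>{1..<j}. p i)"

definition Cpi :: "(nat \<Rightarrow> nat) \<Rightarrow> nat \<Rightarrow> real" where
  "Cpi p j = real (\<Sum>i\<in>{1..j}. p i)"

definition Cs :: "(nat \<Rightarrow> nat) \<Rightarrow> (nat \<Rightarrow> real) \<Rightarrow> nat \<Rightarrow> real" where
  "Cs p S j = S j + real (p j)"

definition is_schedule :: "nat \<Rightarrow> (nat \<Rightarrow> nat) \<Rightarrow> int \<Rightarrow> int \<Rightarrow> (nat \<Rightarrow> real) \<Rightarrow> bool" where
  "is_schedule n p T1 T2 S \<longleftrightarrow>
     (\<forall>j\<in>{1..n}. S j \<ge> 0) \<and>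
     (\<forall>i\<in>{1..n}. \<forall>j\<in>{1..n}. i \<noteq> j \<longrightarrow> Cs p S i \<le> S j \<or> Cs p S j \<le> S i) \<and>
     (\<forall>j\<in>{1..n}. Cs p S j \<le> real_of_int T1 \<or> S j \<ge> real_of_int T2)"

definition dev :: "(nat \<Rightarrow> nat) \<Rightarrow> (nat \<Rightarrow> real) \<Rightarrow> nat \<Rightarrow> real" where
  "dev p S j = \<bar>Cs p S j - Cpi p j\<bar>"

definition Dmax :: "nat \<Rightarrow> (nat \<Rightarrow> nat) \<Rightarrow> (nat \<Rightarrow> real) \<Rightarrow> real" where
  "Dmax n p S = Max (dev p S ` {1..n})"

definition feasible :: "nat \<Rightarrow> (nat \<Rightarrow> nat) \<Rightarrow> int \<Rightarrow> int \<Rightarrow> int \<Rightarrow> (nat \<Rightarrow> real) \<Rightarrow> bool" where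
  "feasible n p T1 T2 k S \<longleftrightarrow> is_schedule n p T1 T2 S \<and> Dmax n p S \<le> real_of_int k"

definition cost :: "nat \<Rightarrow> (nat \<Rightarrow> nat) \<Rightarrow> (nat \<Rightarrow> nat) \<Rightarrow> rat \<Rightarrow> (nat \<Rightarrow> real) \<Rightarrow> real" where
  "cost n p w \<mu> S = of_rat \<mu> * Dmax n p S + (\<Sum>j\<in>{1..n}. real (w j) * Cs p S j)"

definition optimal :: "nat \<Rightarrow> (nat \<Rightarrow> nat) \<Rightarrow> (nat \<Rightarrow> nat) \<Rightarrow> int \<Rightarrow> int \<Rightarrow> int \<Rightarrow> rat \<Rightarrow> (nat \<Rightarrow> real) \<Rightarrow> bool" where
  "optimal n p w T1 T2 k \<mu> S \<longleftrightarrow> feasible n p T1 T2 k S \<and>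
     (\<forall>S'. feasible n p T1 T2 k S' \<longrightarrow> cost n p w \<mu> S \<le> cost n p w \<mu> S')"

definition earlier :: "nat \<Rightarrow> (nat \<Rightarrow> nat) \<Rightarrow> int \<Rightarrow> (nat \<Rightarrow> real) \<Rightarrow> nat set" where
  "earlier n p T1 S = {j\<in>{1..n}. Cs p S j \<le> real_of_int T1}"

definition later :: "nat \<Rightarrow> (nat \<Rightarrow> nat) \<Rightarrow> int \<Rightarrow> (nat \<Rightarrow> real) \<Rightarrow> nat set" where
  "later n p T2 S = {j\<in>{1..n}. Cs p S j > real_of_int T2}"

definition free_int :: "nat set \<Rightarrow> (nat \<Rightarrow> nat) \<Rightarrow> (nat \<Rightarrow> real) \<Rightarrow> real \<Rightarrow> real \<Rightarrow> bool" where
  "free_int E p S a b \<longleftrightarrow> (\<forall>j\<in>E. Cs p S j \<le> a \<or> b \<le> S j)"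

definition idle_period :: "nat set \<Rightarrow> (nat \<Rightarrow> nat) \<Rightarrow> (nat \<Rightarrow> real) \<Rightarrow> real \<Rightarrow> real \<Rightarrow> bool" where
  "idle_period E p S a b \<longleftrightarrow> E \<noteq> {} \<and> a < b \<and> 0 \<le> a \<and> b \<le> Max (Cs p S ` E) \<and>
     free_int E p S a b \<and>
     (\<forall>a' b'. a' \<le> a \<and> b \<le> b' \<and> 0 \<le> a' \<and> b' \<le> Max (Cs p S ` E) \<and> free_int E p S a' b'
        \<longrightarrow> a' = a \<and> b' = b)"

definition idles_after :: "nat set \<Rightarrow> (nat \<Rightarrow> nat) \<Rightarrow> (nat \<Rightarrow> real) \<Rightarrow> real \<Rightarrow> bool" where
  "idles_after L p S T \<longleftrightarrow> L \<noteq> {} \<and>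
     (\<exists>a b. T \<le> a \<and> a < b \<and> b \<le> Max (Cs p S ` L) \<and> free_int L p S a b)"

end

theory Submission
  imports Defs
begin



lemma Spi_Suc: "Spi p (Suc j) = Cpi p j"
  unfolding Spi_def Cpi_def by (simp add: atLeastLessThanSuc_atLeastAtMost)

lemma Cpi_Suc: "Cpi p (Suc j) = Cpi p j + real (p (Suc j))"
  unfolding Cpi_def by simp

lemma Cpi_Spi: "1 \<le> j \<Longrightarrow> Cpi p j = Spi p j + real (p j)"
  using Cpi_Suc[of p "j-1"] Spi_Suc[of p "j-1"] by simp

lemma Spi_nonneg: "0 \<le> Spi p j" unfolding Spi_def by (metis of_nat_0_le_iff)

lemma Spi_mono: "i \<le> j \<Longrightarrow> Spi p i \<le> Spi p j"
  unfolding Spi_def by (intro of_nat_mono sum_mono2) auto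

lemma Cpi_mono: "i \<le> j \<Longrightarrow> Cpi p i \<le> Cpi p j"
  unfolding Cpi_def by (intro of_nat_mono sum_mono2) auto

lemma Cpi_le_Spi: "i < j \<Longrightarrow> Cpi p i \<le> Spi p j"
  using Spi_Suc[of p i] Spi_mono[of "Suc i" j p] by simp

primrec H :: "(nat \<Rightarrow> nat) \<Rightarrow> nat set \<Rightarrow> real \<Rightarrow> nat \<Rightarrow> real" where
  "H p E D 0 = 0"
| "H p E D (Suc j) = (if Suc j \<in> E then max (H p E D j) (Spi p (Suc j) - D) + real (p (Suc j)) else H p E D j)"

lemma H_nonneg: "0 \<le> H p E D j"
  by (induction j) auto

lemma H_Suc_mono: "H p E D j \<le> H p E D (Suc j)"
  by auto

lemma H_mono: "i \<le> j \<Longrightarrow> H p E D i \<le> H p E D j"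
  using H_Suc_mono[of p E D] by (rule lift_Suc_mono_le)

lemma H_le_Cpi: "0 \<le> D \<Longrightarrow> H p E D j \<le> Cpi p j"
proof (induction j)
  case 0 then show ?case by (simp add: Cpi_def)
next
  case (Suc j)
  have "Spi p (Suc j) = Cpi p j" by (rule Spi_Suc)
  then show ?case using Suc Cpi_Suc[of p j] Cpi_mono[of j "Suc j" p] by auto
qed

lemma H_in: "j \<in> E \<Longrightarrow> 1 \<le> j \<Longrightarrow> H p E D j = max (H p E D (j - 1)) (Spi p j - D) + real (p j)"
  by (cases j) auto

lemma H_notin: "j \<notin> E \<Longrightarrow> 1 \<le> j \<Longrightarrow> H p E D j = H p E D (j - 1)"
  by (cases j) auto

lemma H_ge_rel: "j \<in> E \<Longrightarrow> 1 \<le> j \<Longrightarrow> Cpi p j - D \<le> H p E D j"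
  using H_in[of j E p D] Cpi_Spi[of j p] by auto

lemma H_ge_sum: "0 \<notin> E \<Longrightarrow> real (\<Sum>i\<in>{i\<in>E. i \<le> j}. p i) \<le> H p E D j"
proof (induction j)
  case 0
  then have "{i\<in>E. i \<le> 0} = {}" using 0 by auto
  then show ?case by (simp only: sum.empty H.simps(1) of_nat_0 order_refl)
next
  case (Suc j)
  show ?case
  proof (cases "Suc j \<in> E")
    case True
    have "{i\<in>E. i \<le> Suc j} = insert (Suc j) {i\<in>E. i \<le> j}" using True by auto
    then have "real (\<Sum>i\<in>{i\<in>E. i \<le> Suc j}. p i) = real (p (Suc j)) + real (\<Sum>i\<in>{i\<in>E. i \<le> j}. p i)"
      by simp
    then show ?thesis using Suc True by auto
  next
    case False
    have "{i\<in>E. i \<le> Suc j} = {i\<in>E. i \<le> j}" using False le_Suc_eq by auto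
    then show ?thesis using Suc False by auto
  qed
qed

lemma H_zero: "(\<forall>i\<in>E. j < i) \<Longrightarrow> H p E D j = 0"
proof (induction j)
  case (Suc j)
  then have "\<forall>i\<in>E. j < i" by auto
  then show ?case using Suc by auto
qed simp

lemma H_const: "(\<forall>x. a < x \<and> x \<le> b \<longrightarrow> x \<notin> E) \<Longrightarrow> a \<le> b \<Longrightarrow> H p E D b = H p E D a"
proof (induction b)
  case 0 then show ?case by simp
next
  case (Suc b)
  show ?case
  proof (cases "a = Suc b")
    case False
    then have ab: "a \<le> b" using Suc.prems(2) by auto
    have nb: "Suc b \<notin> E" using Suc.prems(1) ab by auto
    have "\<forall>x. a < x \<and> x \<le> b \<longrightarrow> x \<notin> E" using Suc.prems(1) by auto
    then have "H p E D b = H p E D a" using Suc.IH ab by blast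
    then show ?thesis using nb by simp
  qed simp
qed

lemma H_prev: "H p E D m = 0 \<or> (\<exists>i\<in>E. 1 \<le> i \<and> i \<le> m \<and> H p E D m = H p E D i)"
proof (induction m)
  case 0 then show ?case by simp
next
  case (Suc m)
  show ?case
  proof (cases "Suc m \<in> E")
    case True then show ?thesis by (intro disjI2 bexI[of _ "Suc m"]) auto
  next
    case False
    then have e: "H p E D (Suc m) = H p E D m" by simp
    consider "H p E D m = 0" | i where "i \<in> E" "1 \<le> i" "i \<le> m" "H p E D m = H p E D i"
      using Suc.IH by blast
    then show ?thesis
    proof cases
      case 1 then show ?thesis using e by simp
    next
      case (2 i)
      then have "i \<in> E \<and> 1 \<le> i \<and> i \<le> Suc m \<and> H p E D (Suc m) = H p E D i" using e by simp
      then show ?thesis by blast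
    qed
  qed
qed

lemma H_cont: "continuous_on UNIV (\<lambda>D. H p E D j)"
proof (induction j)
  case (Suc j)
  have c2: "continuous_on UNIV (\<lambda>D. Spi p (Suc j) - D)" by (intro continuous_intros)
  have "continuous_on UNIV (\<lambda>D. max (H p E D j) (Spi p (Suc j) - D) + real (p (Suc j)))"
    by (intro continuous_on_add continuous_on_max Suc c2 continuous_on_const)
  then show ?case using Suc.IH by (cases "Suc j \<in> E") simp_all
qed simp




definition nonov :: "nat set \<Rightarrow> (nat \<Rightarrow> nat) \<Rightarrow> (nat \<Rightarrow> real) \<Rightarrow> bool" where
  "nonov A p S \<longleftrightarrow> (\<forall>i\<in>A. \<forall>j\<in>A. i \<noteq> j \<longrightarrow> S i + real (p i) \<le> S j \<or> S j + real (p j) \<le> S i)"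

lemma ex_argmax: "finite A \<Longrightarrow> A \<noteq> {} \<Longrightarrow> \<exists>m\<in>A. \<forall>x\<in>A. (f x::real) \<le> f m"
proof -
  assume fA: "finite A" and ne: "A \<noteq> {}"
  have "Max (f`A) \<in> f`A" using fA ne by simp
  then obtain m where m: "m\<in>A" "f m = Max (f ` A)" by auto
  show ?thesis using fA m by (intro bexI[of _ m]) auto
qed

lemma nonov_subset: "nonov A p S \<Longrightarrow> B \<subseteq> A \<Longrightarrow> nonov B p S"
  unfolding nonov_def by blast

lemma pack_sum:
  assumes "finite A" "nonov A p S" "\<forall>j\<in>A. p j > 0" "\<forall>j\<in>A. t \<le> S j" "m \<in> A" "\<forall>x\<in>A. S x \<le> S m"
  shows "t + (\<Sum>i\<in>A. real (p i)) \<le> S m + real (p m)"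
  using assms
proof (induction "card A" arbitrary: A m rule: less_induct)
  case less
  define A' where "A' = A - {m}"
  have fA': "finite A'" using less.prems(1) A'_def by simp
  have sumA: "(\<Sum>i\<in>A. real (p i)) = real (p m) + (\<Sum>i\<in>A'. real (p i))"
    using less.prems(1,5) A'_def by (simp add: sum.remove)
  show ?case
  proof (cases "A' = {}")
    case True
    then show ?thesis using sumA less.prems(4,5) by simp
  next
    case False
    obtain m' where m': "m' \<in> A'" "\<forall>x\<in>A'. S x \<le> S m'" using ex_argmax[OF fA' False] by blast
    have cardlt: "card A' < card A" using less.prems(1,5) unfolding A'_def by (rule card_Diff1_less)
    have "t + (\<Sum>i\<in>A'. real (p i)) \<le> S m' + real (p m')"
      using less.hyps[OF cardlt fA' _ _ _ m'(1) m'(2)] nonov_subset[OF less.prems(2)] less.prems(3,4) A'_def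
      by auto
    moreover have "S m' + real (p m') \<le> S m"
    proof -
      have "m' \<in> A" "m' \<noteq> m" using m'(1) A'_def by auto
      then have "S m' + real (p m') \<le> S m \<or> S m + real (p m) \<le> S m'"
        using less.prems(2,5) unfolding nonov_def by blast
      moreover have "S m' \<le> S m" using less.prems(6) \<open>m' \<in> A\<close> by blast
      moreover have "p m > 0" using less.prems(3,5) by blast
      ultimately show ?thesis by auto
    qed
    ultimately show ?thesis using sumA by linarith
  qed
qed

lemma pack_wsum:
  assumes "finite A" "nonov A p S" "\<forall>j\<in>A. p j > 0" "\<forall>j\<in>A. t \<le> S j"
    and ws: "\<forall>i\<in>A. \<forall>j\<in>A. i \<le> j \<longrightarrow> p i * w j \<le> p j * w i"
  shows "(\<Sum>j\<in>A. real (w j) * (t + (\<Sum>i\<in>{i\<in>A. i \<le> j}. real (p i))))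
       \<le> (\<Sum>j\<in>A. real (w j) * (S j + real (p j)))"
  using assms
proof (induction "card A" arbitrary: A rule: less_induct)
  case less
  show ?case
  proof (cases "A = {}")
    case True then show ?thesis by simp
  next
    case False
    obtain m where m: "m \<in> A" "\<forall>x\<in>A. S x \<le> S m" using ex_argmax[OF less.prems(1) False] by blast
    define A' where "A' = A - {m}"
    have fA': "finite A'" using less.prems(1) A'_def by simp
    have cardlt: "card A' < card A" using less.prems(1) m(1) unfolding A'_def by (rule card_Diff1_less)
    have IH: "(\<Sum>j\<in>A'. real (w j) * (t + (\<Sum>i\<in>{i\<in>A'. i \<le> j}. real (p i))))
       \<le> (\<Sum>j\<in>A'. real (w j) * (S j + real (p j)))"
      using less.hyps[OF cardlt fA'] nonov_subset[OF less.prems(2)] less.prems(3,4,5) A'_def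
      by (simp add: Ball_def)
    have pk: "t + (\<Sum>i\<in>A. real (p i)) \<le> S m + real (p m)"
      using pack_sum[OF less.prems(1-4) m] .
    have split1: "\<And>j. j \<in> A' \<Longrightarrow> (\<Sum>i\<in>{i\<in>A. i \<le> j}. real (p i))
        = (\<Sum>i\<in>{i\<in>A'. i \<le> j}. real (p i)) + (if m \<le> j then real (p m) else 0)"
    proof -
      fix j assume j: "j \<in> A'"
      show "(\<Sum>i\<in>{i\<in>A. i \<le> j}. real (p i))
        = (\<Sum>i\<in>{i\<in>A'. i \<le> j}. real (p i)) + (if m \<le> j then real (p m) else 0)"
      proof (cases "m \<le> j")
        case True
        have "{i\<in>A. i \<le> j} = insert m {i\<in>A'. i \<le> j}" using True m(1) A'_def by auto
        then show ?thesis using True fA' A'_def by simp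
      next
        case False
        have "{i\<in>A. i \<le> j} = {i\<in>A'. i \<le> j}" using False A'_def by auto
        then show ?thesis using False by simp
      qed
    qed
    have L: "(\<Sum>j\<in>A. real (w j) * (t + (\<Sum>i\<in>{i\<in>A. i \<le> j}. real (p i))))
      = (\<Sum>j\<in>A'. real (w j) * (t + (\<Sum>i\<in>{i\<in>A'. i \<le> j}. real (p i))))
        + (\<Sum>j\<in>A'. real (w j) * (if m \<le> j then real (p m) else 0))
        + real (w m) * (t + (\<Sum>i\<in>{i\<in>A. i \<le> m}. real (p i)))"
    proof -
      have "(\<Sum>j\<in>A. real (w j) * (t + (\<Sum>i\<in>{i\<in>A. i \<le> j}. real (p i))))
         = real (w m) * (t + (\<Sum>i\<in>{i\<in>A. i \<le> m}. real (p i)))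
           + (\<Sum>j\<in>A'. real (w j) * (t + (\<Sum>i\<in>{i\<in>A. i \<le> j}. real (p i))))"
        using less.prems(1) m(1) A'_def by (simp add: sum.remove)
      also have "(\<Sum>j\<in>A'. real (w j) * (t + (\<Sum>i\<in>{i\<in>A. i \<le> j}. real (p i))))
         = (\<Sum>j\<in>A'. real (w j) * (t + (\<Sum>i\<in>{i\<in>A'. i \<le> j}. real (p i)))
              + real (w j) * (if m \<le> j then real (p m) else 0))"
        by (rule sum.cong) (simp_all add: split1 algebra_simps)
      also have "\<dots> = (\<Sum>j\<in>A'. real (w j) * (t + (\<Sum>i\<in>{i\<in>A'. i \<le> j}. real (p i))))
              + (\<Sum>j\<in>A'. real (w j) * (if m \<le> j then real (p m) else 0))"
        by (rule sum.distrib)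
      finally show ?thesis by simp
    qed
    have R: "(\<Sum>j\<in>A. real (w j) * (S j + real (p j)))
       = (\<Sum>j\<in>A'. real (w j) * (S j + real (p j))) + real (w m) * (S m + real (p m))"
      using less.prems(1) m(1) A'_def by (simp add: sum.remove)
    define G where "G = {j\<in>A. m < j}"
    have fG: "finite G" using less.prems(1) G_def by simp
    have mid: "(\<Sum>j\<in>A'. real (w j) * (if m \<le> j then real (p m) else 0))
        = (\<Sum>j\<in>G. real (w j) * real (p m))"
    proof -
      have "(\<Sum>j\<in>A'. real (w j) * (if m \<le> j then real (p m) else 0))
          = (\<Sum>j\<in>{j\<in>A'. m \<le> j}. real (w j) * real (p m))"
      proof -
        have "(\<Sum>j\<in>A'. real (w j) * (if m \<le> j then real (p m) else 0))
           = (\<Sum>j\<in>A'. if m \<le> j then real (w j) * real (p m) else 0)"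
          by (rule sum.cong) auto
        also have "\<dots> = (\<Sum>j\<in>{j\<in>A'. m \<le> j}. real (w j) * real (p m))"
          using fA' by (simp add: sum.inter_filter)
        finally show ?thesis .
      qed
      also have "{j\<in>A'. m \<le> j} = G" using A'_def G_def by auto
      finally show ?thesis .
    qed
    have sA: "(\<Sum>i\<in>A. real (p i)) = (\<Sum>i\<in>{i\<in>A. i \<le> m}. real (p i)) + (\<Sum>i\<in>G. real (p i))"
    proof -
      have "A = {i\<in>A. i \<le> m} \<union> G" "{i\<in>A. i \<le> m} \<inter> G = {}" using G_def by auto
      then show ?thesis using less.prems(1) fG by (metis (no_types, lifting) finite_Un sum.union_disjoint)
    qed
    have wsG: "(\<Sum>j\<in>G. real (w j) * real (p m)) \<le> (\<Sum>j\<in>G. real (w m) * real (p j))"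
    proof (rule sum_mono)
      fix j assume "j \<in> G"
      then have "j \<in> A" "m \<le> j" using G_def by auto
      then have "p m * w j \<le> p j * w m" using less.prems(5)[rule_format, of m j] m(1) by blast
      then have "real (p m * w j) \<le> real (p j * w m)" by (rule of_nat_mono)
      then show "real (w j) * real (p m) \<le> real (w m) * real (p j)" by (simp add: mult.commute)
    qed
    have "real (w m) * (\<Sum>i\<in>G. real (p i)) = (\<Sum>j\<in>G. real (w m) * real (p j))"
      by (simp add: sum_distrib_left)
    then have key: "(\<Sum>j\<in>A'. real (w j) * (if m \<le> j then real (p m) else 0))
        + real (w m) * (t + (\<Sum>i\<in>{i\<in>A. i \<le> m}. real (p i))) \<le> real (w m) * (t + (\<Sum>i\<in>A. real (p i)))"
      using mid sA wsG by (simp add: algebra_simps)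
    have "real (w m) * (t + (\<Sum>i\<in>A. real (p i))) \<le> real (w m) * (S m + real (p m))"
      using pk by (simp add: mult_left_mono)
    then show ?thesis using L R IH key by linarith
  qed
qed




lemma block:
  assumes fE: "finite E" and E0: "0 \<notin> E" and x: "x \<in> E" "x \<le> N"
  shows "\<exists>s\<in>E. s \<le> N \<and> 1 \<le> s \<and> (\<forall>j. s \<le> j \<longrightarrow> j \<le> N \<longrightarrow>
     H p E D j = max 0 (Spi p s - D) + (\<Sum>i\<in>{i\<in>E. s \<le> i \<and> i \<le> j}. real (p i)))"
proof -
  define B where "B = {s\<in>E. s \<le> N \<and> H p E D (s-1) \<le> max 0 (Spi p s - D)}"
  have fB: "finite B" using fE B_def by simp
  define f where "f = Min {i\<in>E. i \<le> N}"
  have fin2: "finite {i\<in>E. i \<le> N}" using fE by simp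
  have ne2: "{i\<in>E. i \<le> N} \<noteq> {}" using x by auto
  have fmem: "f \<in> E" "f \<le> N" using Min_in[OF fin2 ne2] f_def by auto
  have f1: "1 \<le> f" using fmem E0 by (cases f) auto
  have "\<forall>i\<in>E. f - 1 < i"
  proof
    fix i assume i: "i \<in> E"
    show "f - 1 < i"
    proof (cases "i \<le> N")
      case True then have "f \<le> i" using Min_le[OF fin2] i f_def by auto
      then show ?thesis using f1 by linarith
    next
      case False then show ?thesis using fmem by linarith
    qed
  qed
  then have "H p E D (f - 1) = 0" by (rule H_zero)
  then have "f \<in> B" using fmem B_def by simp
  then have neB: "B \<noteq> {}" by auto
  define s where "s = Max B"
  have sB: "s \<in> B" using Max_in[OF fB neB] s_def by simp
  have sE: "s \<in> E" "s \<le> N" and sH: "H p E D (s-1) \<le> max 0 (Spi p s - D)" using sB B_def by auto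
  have s1: "1 \<le> s" using sE E0 by (cases s) auto
  have big: "\<And>j. j \<in> E \<Longrightarrow> s < j \<Longrightarrow> j \<le> N \<Longrightarrow> max 0 (Spi p j - D) < H p E D (j-1)"
  proof -
    fix j assume j: "j \<in> E" "s < j" "j \<le> N"
    have "j \<notin> B" using j Max_ge[OF fB] s_def by fastforce
    then show "max 0 (Spi p j - D) < H p E D (j-1)" using j B_def by auto
  qed
  have "\<forall>j. s \<le> j \<longrightarrow> j \<le> N \<longrightarrow>
     H p E D j = max 0 (Spi p s - D) + (\<Sum>i\<in>{i\<in>E. s \<le> i \<and> i \<le> j}. real (p i))"
  proof (intro allI)
    fix j show "s \<le> j \<longrightarrow> j \<le> N \<longrightarrow>
     H p E D j = max 0 (Spi p s - D) + (\<Sum>i\<in>{i\<in>E. s \<le> i \<and> i \<le> j}. real (p i))"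
    proof (induction j)
      case 0 then show ?case using s1 by simp
    next
      case (Suc j)
      show ?case
      proof (intro impI)
        assume a: "s \<le> Suc j" "Suc j \<le> N"
        show "H p E D (Suc j) = max 0 (Spi p s - D) + (\<Sum>i\<in>{i\<in>E. s \<le> i \<and> i \<le> Suc j}. real (p i))"
        proof (cases "s = Suc j")
          case True
          have st: "{i\<in>E. s \<le> i \<and> i \<le> Suc j} = {s}" using True sE by auto
          have hj: "H p E D j \<le> max 0 (Spi p s - D)" using sH True by simp
          have "max (H p E D j) (Spi p (Suc j) - D) = max 0 (Spi p s - D)"
            using hj H_nonneg[of p E D j] True by (auto simp: max_def)
          then show ?thesis using st True sE by simp
        next
          case False
          then have sj: "s \<le> j" "j \<le> N" using a by auto
          then have IH: "H p E D j = max 0 (Spi p s - D) + (\<Sum>i\<in>{i\<in>E. s \<le> i \<and> i \<le> j}. real (p i))"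
            using Suc.IH by blast
          show ?thesis
          proof (cases "Suc j \<in> E")
            case True
            have "max 0 (Spi p (Suc j) - D) < H p E D j" using big[OF True] sj a by simp
            then have "max (H p E D j) (Spi p (Suc j) - D) = H p E D j" by auto
            then have e1: "H p E D (Suc j) = H p E D j + real (p (Suc j))" using True by simp
            have "{i\<in>E. s \<le> i \<and> i \<le> Suc j} = insert (Suc j) {i\<in>E. s \<le> i \<and> i \<le> j}"
              using True sj by auto
            then have "(\<Sum>i\<in>{i\<in>E. s \<le> i \<and> i \<le> Suc j}. real (p i))
               = real (p (Suc j)) + (\<Sum>i\<in>{i\<in>E. s \<le> i \<and> i \<le> j}. real (p i))" by simp
            then show ?thesis using e1 IH by simp
          next
            case False
            have "{i\<in>E. s \<le> i \<and> i \<le> Suc j} = {i\<in>E. s \<le> i \<and> i \<le> j}"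
              using False le_Suc_eq by auto
            then show ?thesis using False IH by simp
          qed
        qed
      qed
    qed
  qed
  then show ?thesis using sE s1 by blast
qed

lemma LB_E:
  assumes fE: "finite E" and E0: "0 \<notin> E" and pp: "\<forall>j\<in>E. p j > 0"
    and ws: "\<forall>i\<in>E. \<forall>j\<in>E. i \<le> j \<longrightarrow> p i * w j \<le> p j * w i"
    and no: "nonov E p S" and S0: "\<forall>j\<in>E. 0 \<le> S j" and rel: "\<forall>j\<in>E. Cpi p j - D \<le> S j + real (p j)"
  shows "(\<Sum>j\<in>{j\<in>E. j \<le> N}. real (w j) * H p E D j) \<le> (\<Sum>j\<in>{j\<in>E. j \<le> N}. real (w j) * (S j + real (p j)))"
proof (induction N rule: less_induct)
  case (less N)
  show ?case
  proof (cases "{j\<in>E. j \<le> N} = {}")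
    case True then show ?thesis by (simp only: sum.empty order_refl)
  next
    case False
    then obtain x where x: "x \<in> E" "x \<le> N" by auto
    obtain s where s: "s \<in> E" "s \<le> N" "1 \<le> s" and sH: "\<forall>j. s \<le> j \<longrightarrow> j \<le> N \<longrightarrow>
      H p E D j = max 0 (Spi p s - D) + (\<Sum>i\<in>{i\<in>E. s \<le> i \<and> i \<le> j}. real (p i))"
      using block[OF fE E0 x] by blast
    define \<rho> where "\<rho> = max 0 (Spi p s - D)"
    define A where "A = {j\<in>E. s \<le> j \<and> j \<le> N}"
    have fA: "finite A" using fE A_def by simp
    have AE: "A \<subseteq> E" using A_def by auto
    have Sge: "\<forall>j\<in>A. \<rho> \<le> S j"
    proof
      fix j assume j: "j \<in> A"
      then have jE: "j \<in> E" and sj: "s \<le> j" using A_def by auto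
      have j1: "1 \<le> j" using sj s(3) by simp
      have "Cpi p j - D \<le> S j + real (p j)" using rel jE by blast
      then have "Spi p j - D \<le> S j" using Cpi_Spi[OF j1, of p] by simp
      moreover have "Spi p s \<le> Spi p j" using sj by (rule Spi_mono)
      moreover have "0 \<le> S j" using S0 jE by blast
      ultimately show "\<rho> \<le> S j" using \<rho>_def by auto
    qed
    have pw: "(\<Sum>j\<in>A. real (w j) * (\<rho> + (\<Sum>i\<in>{i\<in>A. i \<le> j}. real (p i))))
       \<le> (\<Sum>j\<in>A. real (w j) * (S j + real (p j)))"
      using pack_wsum[OF fA nonov_subset[OF no AE] _ Sge] pp ws AE by blast
    have eqA: "(\<Sum>j\<in>A. real (w j) * H p E D j) = (\<Sum>j\<in>A. real (w j) * (\<rho> + (\<Sum>i\<in>{i\<in>A. i \<le> j}. real (p i))))"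
    proof (rule sum.cong)
      fix j assume j: "j \<in> A"
      have "{i\<in>A. i \<le> j} = {i\<in>E. s \<le> i \<and> i \<le> j}" using j A_def by auto
      then show "real (w j) * H p E D j = real (w j) * (\<rho> + (\<Sum>i\<in>{i\<in>A. i \<le> j}. real (p i)))"
        using sH j A_def \<rho>_def by simp
    qed simp
    have IH: "(\<Sum>j\<in>{j\<in>E. j \<le> s - 1}. real (w j) * H p E D j) \<le> (\<Sum>j\<in>{j\<in>E. j \<le> s - 1}. real (w j) * (S j + real (p j)))"
      using less.IH[of "s - 1"] s by simp
    have un: "{j\<in>E. j \<le> N} = {j\<in>E. j \<le> s - 1} \<union> A" "{j\<in>E. j \<le> s - 1} \<inter> A = {}"
      using A_def s by auto
    have f1: "finite {j\<in>E. j \<le> s - 1}" using fE by simp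
    show ?thesis
      unfolding un(1) using sum.union_disjoint[OF f1 fA un(2)] IH pw eqA
      by (smt (verit) sum.union_disjoint[OF f1 fA un(2)])
  qed
qed

lemma LB_E_mk:
  assumes fE: "finite E" and E0: "0 \<notin> E" and pp: "\<forall>j\<in>E. p j > 0"
    and no: "nonov E p S" and S0: "\<forall>j\<in>E. 0 \<le> S j" and rel: "\<forall>j\<in>E. Cpi p j - D \<le> S j + real (p j)"
    and x: "x \<in> E" "x \<le> N"
  shows "\<exists>j\<in>E. H p E D N \<le> S j + real (p j)"
proof -
  obtain s where s: "s \<in> E" "s \<le> N" "1 \<le> s" and sH: "\<forall>j. s \<le> j \<longrightarrow> j \<le> N \<longrightarrow>
      H p E D j = max 0 (Spi p s - D) + (\<Sum>i\<in>{i\<in>E. s \<le> i \<and> i \<le> j}. real (p i))"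
    using block[OF fE E0 x] by blast
  define \<rho> where "\<rho> = max 0 (Spi p s - D)"
  define A where "A = {j\<in>E. s \<le> j \<and> j \<le> N}"
  have fA: "finite A" using fE A_def by simp
  have AE: "A \<subseteq> E" using A_def by auto
  have neA: "A \<noteq> {}" using s A_def by auto
  have Sge: "\<forall>j\<in>A. \<rho> \<le> S j"
  proof
    fix j assume j: "j \<in> A"
    then have jE: "j \<in> E" and sj: "s \<le> j" using A_def by auto
    have j1: "1 \<le> j" using sj s(3) by simp
    have "Cpi p j - D \<le> S j + real (p j)" using rel jE by blast
    then have "Spi p j - D \<le> S j" using Cpi_Spi[OF j1, of p] by simp
    moreover have "Spi p s \<le> Spi p j" using sj by (rule Spi_mono)
    moreover have "0 \<le> S j" using S0 jE by blast
    ultimately show "\<rho> \<le> S j" using \<rho>_def by auto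
  qed
  obtain m where m: "m \<in> A" "\<forall>x\<in>A. S x \<le> S m" using ex_argmax[OF fA neA] by blast
  have "\<rho> + (\<Sum>i\<in>A. real (p i)) \<le> S m + real (p m)"
    using pack_sum[OF fA nonov_subset[OF no AE] _ Sge m] pp AE by blast
  moreover have "H p E D N = \<rho> + (\<Sum>i\<in>A. real (p i))" using sH s A_def \<rho>_def by simp
  ultimately show ?thesis using m AE by auto
qed




locale inst =
  fixes n :: nat and p w :: "nat \<Rightarrow> nat" and T1 T2 k :: int and \<mu> :: rat
  assumes pos_p: "\<forall>j\<in>{1..n}. p j > 0"
    and pos_w: "\<forall>j\<in>{1..n}. w j > 0"
    and wspt: "\<forall>i\<in>{1..n}. \<forall>j\<in>{1..n}. i \<le> j \<longrightarrow> p i * w j \<le> p j * w i"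
    and T1_nonneg: "0 \<le> T1" and T1_T2: "T1 < T2"
    and mu_nonneg: "0 \<le> \<mu>"
    and T1_lt_P: "real_of_int T1 < real (\<Sum>j\<in>{1..n}. p j)"
    and n1: "1 \<le> n"
begin

definition LL :: "nat set \<Rightarrow> nat set" where "LL E = {1..n} - E"

definition Can :: "nat set \<Rightarrow> real \<Rightarrow> nat \<Rightarrow> real" where
  "Can E D j = (if j \<in> E then H p E D j - real (p j) else real_of_int T2 + (\<Sum>i\<in>{i\<in>LL E. i < j}. real (p i)))"

definition LC :: "nat set \<Rightarrow> nat \<Rightarrow> real" where
  "LC E j = real_of_int T2 + (\<Sum>i\<in>{i\<in>LL E. i \<le> j}. real (p i))"

definition fv :: "nat set \<Rightarrow> real \<Rightarrow> real" where
  "fv E D = of_rat \<mu> * D + (\<Sum>j\<in>E. real (w j) * H p E D j) + (\<Sum>j\<in>LL E. real (w j) * LC E j)"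

definition dm :: "nat set \<Rightarrow> real \<Rightarrow> bool" where
  "dm E D \<longleftrightarrow> E \<subseteq> {1..n} \<and> 0 \<le> D \<and> D \<le> real_of_int k \<and> H p E D n \<le> real_of_int T1
     \<and> (\<forall>j\<in>LL E. real_of_int T2 - Spi p j \<le> D)"

lemma T12: "real_of_int T1 < real_of_int T2" using T1_T2 by simp
lemma T1nn: "0 \<le> real_of_int T1" using T1_nonneg by simp

lemma Cs_Can_E: "j \<in> E \<Longrightarrow> Cs p (Can E D) j = H p E D j"
  unfolding Cs_def Can_def by simp

lemma Cs_Can_L: "j \<in> LL E \<Longrightarrow> Cs p (Can E D) j = LC E j"
proof -
  assume j: "j \<in> LL E"
  then have jE: "j \<notin> E" unfolding LL_def by auto
  have "{i\<in>LL E. i \<le> j} = insert j {i\<in>LL E. i < j}" using j by auto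
  then have "(\<Sum>i\<in>{i\<in>LL E. i \<le> j}. real (p i)) = real (p j) + (\<Sum>i\<in>{i\<in>LL E. i < j}. real (p i))"
    by (simp add: LL_def)
  then show ?thesis unfolding Cs_def Can_def LC_def using jE by simp
qed

lemma dm_E0: "dm E D \<Longrightarrow> 0 \<notin> E" unfolding dm_def by auto
lemma dm_fin: "dm E D \<Longrightarrow> finite E" unfolding dm_def using finite_subset by blast

lemma H_le_T1: "dm E D \<Longrightarrow> j \<le> n \<Longrightarrow> H p E D j \<le> real_of_int T1"
proof -
  assume d: "dm E D" and j: "j \<le> n"
  have "H p E D j \<le> H p E D n" by (rule H_mono[OF j])
  then show ?thesis using d unfolding dm_def by linarith
qed

lemma LL_ne: "dm E D \<Longrightarrow> LL E \<noteq> {}"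
proof -
  assume d: "dm E D"
  show "LL E \<noteq> {}"
  proof
  assume e: "LL E = {}"
  then have "E = {1..n}" using d unfolding LL_def dm_def by auto
  then have "{i\<in>E. i \<le> n} = {1..n}" by auto
  moreover have "real (\<Sum>i\<in>{i\<in>E. i \<le> n}. p i) \<le> H p E D n" using H_ge_sum dm_E0[OF d] by blast
  ultimately have "real (\<Sum>j\<in>{1..n}. p j) \<le> H p E D n" by simp
  then show False using d T1_lt_P unfolding dm_def by simp
  qed
qed

lemma Cpi_split: "E \<subseteq> {1..n} \<Longrightarrow> j \<le> n \<Longrightarrow>
   Cpi p j = (\<Sum>i\<in>{i\<in>LL E. i \<le> j}. real (p i)) + (\<Sum>i\<in>{i\<in>E. i \<le> j}. real (p i))"
proof -
  assume E: "E \<subseteq> {1..n}" and j: "j \<le> n"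
  have u: "{1..j} = {i\<in>LL E. i \<le> j} \<union> {i\<in>E. i \<le> j}" "{i\<in>LL E. i \<le> j} \<inter> {i\<in>E. i \<le> j} = {}"
    using E j unfolding LL_def by auto
  have f: "finite {i\<in>LL E. i \<le> j}" "finite {i\<in>E. i \<le> j}" using E unfolding LL_def
    by (auto intro: finite_subset)
  show ?thesis unfolding Cpi_def u(1) using sum.union_disjoint[OF f u(2)] by simp
qed

lemma LC_dev: "dm E D \<Longrightarrow> j \<in> LL E \<Longrightarrow> LC E j - Cpi p j = real_of_int T2 - (\<Sum>i\<in>{i\<in>E. i \<le> j}. real (p i))"
  using Cpi_split[of E j] unfolding dm_def LC_def LL_def by auto

lemma sumE_le_T1: "dm E D \<Longrightarrow> j \<le> n \<Longrightarrow> (\<Sum>i\<in>{i\<in>E. i \<le> j}. real (p i)) \<le> real_of_int T1"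
proof -
  assume d: "dm E D" and j: "j \<le> n"
  have "real (\<Sum>i\<in>{i\<in>E. i \<le> j}. p i) \<le> H p E D j" using H_ge_sum dm_E0[OF d] by blast
  then show ?thesis using H_le_T1[OF d j] by simp
qed

lemma LC_dev_pos: "dm E D \<Longrightarrow> j \<in> LL E \<Longrightarrow> 0 < LC E j - Cpi p j"
  using LC_dev[of E D j] sumE_le_T1[of E D j] T12 unfolding LL_def by auto

lemma LC_dev_le: "dm E D \<Longrightarrow> j \<in> LL E \<Longrightarrow> LC E j - Cpi p j \<le> D"
proof -
  assume d: "dm E D" and j: "j \<in> LL E"
  define m where "m = Min (LL E)"
  have fL: "finite (LL E)" unfolding LL_def by simp
  have mL: "m \<in> LL E" using Min_in[OF fL LL_ne[OF d]] m_def by simp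
  have mj: "m \<le> j" using Min_le[OF fL j] m_def by simp
  have sub: "{1..<m} \<subseteq> {i\<in>E. i \<le> j}"
  proof
    fix i assume i: "i \<in> {1..<m}"
    have "i \<in> E"
    proof (rule ccontr)
      assume "i \<notin> E"
      then have "i \<in> LL E" using i mL unfolding LL_def by auto
      then have "m \<le> i" using Min_le[OF fL] m_def by simp
      then show False using i by simp
    qed
    then show "i \<in> {i\<in>E. i \<le> j}" using i mj by simp
  qed
  have fE: "finite {i\<in>E. i \<le> j}" by simp
  have "Spi p m \<le> (\<Sum>i\<in>{i\<in>E. i \<le> j}. real (p i))"
    unfolding Spi_def using sum_mono2[OF fE sub, of "\<lambda>i. real (p i)"] by simp
  moreover have "real_of_int T2 - Spi p m \<le> D" using d mL unfolding dm_def by blast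
  ultimately show ?thesis using LC_dev[OF d j] by simp
qed

lemma earlier_Can: "dm E D \<Longrightarrow> earlier n p T1 (Can E D) = E"
proof -
  assume d: "dm E D"
  have "\<And>j. j \<in> {1..n} \<Longrightarrow> j \<notin> E \<Longrightarrow> \<not> Cs p (Can E D) j \<le> real_of_int T1"
  proof -
    fix j assume j: "j \<in> {1..n}" "j \<notin> E"
    then have jL: "j \<in> LL E" unfolding LL_def by simp
    have "0 < LC E j - Cpi p j" by (rule LC_dev_pos[OF d jL])
    moreover have "LC E j - Cpi p j = real_of_int T2 - (\<Sum>i\<in>{i\<in>E. i \<le> j}. real (p i))" by (rule LC_dev[OF d jL])
    moreover have "real_of_int T2 \<le> LC E j" unfolding LC_def by (simp add: sum_nonneg)
    moreover have "real_of_int T2 < LC E j"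
    proof -
      have "j \<in> {i\<in>LL E. i \<le> j}" using jL by simp
      then have "real (p j) \<le> (\<Sum>i\<in>{i\<in>LL E. i \<le> j}. real (p i))"
        using member_le_sum[of j "{i\<in>LL E. i \<le> j}" "\<lambda>i. real (p i)"] unfolding LL_def by simp
      then show ?thesis unfolding LC_def using pos_p j by fastforce
    qed
    ultimately show "\<not> Cs p (Can E D) j \<le> real_of_int T1" using Cs_Can_L[OF jL] T12 by simp
  qed
  moreover have "\<And>j. j \<in> E \<Longrightarrow> Cs p (Can E D) j \<le> real_of_int T1"
  proof -
    fix j assume j: "j \<in> E"
    then have "j \<le> n" using d unfolding dm_def by auto
    then show "Cs p (Can E D) j \<le> real_of_int T1" using Cs_Can_E[OF j] H_le_T1[OF d] by simp
  qed
  moreover have "E \<subseteq> {1..n}" using d unfolding dm_def by simp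
  ultimately show ?thesis unfolding earlier_def by blast
qed

lemma LC_gt: "j \<in> LL E \<Longrightarrow> real_of_int T2 < LC E j"
proof -
  assume jL: "j \<in> LL E"
  have "j \<in> {i\<in>LL E. i \<le> j}" using jL by simp
  then have "real (p j) \<le> (\<Sum>i\<in>{i\<in>LL E. i \<le> j}. real (p i))"
    using member_le_sum[of j "{i\<in>LL E. i \<le> j}" "\<lambda>i. real (p i)"] unfolding LL_def by simp
  then show ?thesis unfolding LC_def using pos_p jL unfolding LL_def by fastforce
qed

lemma later_Can: "dm E D \<Longrightarrow> later n p T2 (Can E D) = LL E"
proof -
  assume d: "dm E D"
  have "\<And>j. j \<in> E \<Longrightarrow> \<not> real_of_int T2 < Cs p (Can E D) j"
  proof -
    fix j assume j: "j \<in> E"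
    then have "j \<le> n" using d unfolding dm_def by auto
    then have "H p E D j \<le> real_of_int T1" using H_le_T1[OF d] by simp
    then show "\<not> real_of_int T2 < Cs p (Can E D) j" using Cs_Can_E[OF j, of D] T12 by linarith
  qed
  moreover have "\<And>j. j \<in> LL E \<Longrightarrow> real_of_int T2 < Cs p (Can E D) j"
    using Cs_Can_L LC_gt by simp
  ultimately show ?thesis unfolding later_def LL_def by auto
qed

end



context inst begin

lemma Can_E_start: "j \<in> E \<Longrightarrow> 1 \<le> j \<Longrightarrow> Can E D j = max (H p E D (j-1)) (Spi p j - D)"
  unfolding Can_def using H_in[of j E p D] by simp

lemma dm_E1: "dm E D \<Longrightarrow> j \<in> E \<Longrightarrow> 1 \<le> j \<and> j \<le> n" unfolding dm_def by auto

lemma LL_mem: "j \<in> LL E \<Longrightarrow> j \<notin> E \<and> 1 \<le> j \<and> j \<le> n" unfolding LL_def by auto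

lemma Can_L: "j \<in> LL E \<Longrightarrow> Can E D j = real_of_int T2 + (\<Sum>i\<in>{i\<in>LL E. i < j}. real (p i))"
  unfolding Can_def using LL_mem by auto

lemma ord_EE: "dm E D \<Longrightarrow> i \<in> E \<Longrightarrow> j \<in> E \<Longrightarrow> i < j \<Longrightarrow> Cs p (Can E D) i \<le> Can E D j"
proof -
  assume d: "dm E D" and i: "i \<in> E" and j: "j \<in> E" and ij: "i < j"
  have "H p E D i \<le> H p E D (j-1)" using ij by (intro H_mono) simp
  moreover have "Can E D j = max (H p E D (j-1)) (Spi p j - D)" using Can_E_start[OF j] dm_E1[OF d j] by simp
  ultimately show ?thesis using Cs_Can_E[OF i] by simp
qed

lemma ord_LL: "i \<in> LL E \<Longrightarrow> j \<in> LL E \<Longrightarrow> i < j \<Longrightarrow> Cs p (Can E D) i \<le> Can E D j"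
proof -
  assume i: "i \<in> LL E" and j: "j \<in> LL E" and ij: "i < j"
  have sub: "{i'\<in>LL E. i' \<le> i} \<subseteq> {i'\<in>LL E. i' < j}" using ij by auto
  have "(\<Sum>i'\<in>{i'\<in>LL E. i' \<le> i}. real (p i')) \<le> (\<Sum>i'\<in>{i'\<in>LL E. i' < j}. real (p i'))"
    by (rule sum_mono2[OF _ sub]) (auto simp: LL_def)
  then show ?thesis using Cs_Can_L[OF i] Can_L[OF j] unfolding LC_def by simp
qed

lemma ord_EL: "dm E D \<Longrightarrow> i \<in> E \<Longrightarrow> j \<in> LL E \<Longrightarrow> Cs p (Can E D) i \<le> Can E D j"
proof -
  assume d: "dm E D" and i: "i \<in> E" and j: "j \<in> LL E"
  have "H p E D i \<le> real_of_int T1" using H_le_T1[OF d] dm_E1[OF d i] by simp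
  moreover have "real_of_int T2 \<le> Can E D j" using Can_L[OF j] by (simp add: sum_nonneg)
  ultimately show ?thesis using Cs_Can_E[OF i] T12 by simp
qed

lemma sched_Can: "dm E D \<Longrightarrow> is_schedule n p T1 T2 (Can E D)"
proof -
  assume d: "dm E D"
  have mem: "\<And>j. j \<in> {1..n} \<Longrightarrow> j \<in> E \<or> j \<in> LL E" unfolding LL_def by auto
  have ord: "\<And>i j. i \<in> {1..n} \<Longrightarrow> j \<in> {1..n} \<Longrightarrow> i < j \<Longrightarrow>
     Cs p (Can E D) i \<le> Can E D j \<or> Cs p (Can E D) j \<le> Can E D i"
  proof -
    fix i j assume i: "i \<in> {1..n}" and j: "j \<in> {1..n}" and ij: "i < j"
    show "Cs p (Can E D) i \<le> Can E D j \<or> Cs p (Can E D) j \<le> Can E D i"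
      using mem[OF i] mem[OF j] ord_EE[OF d _ _ ij] ord_LL[OF _ _ ij] ord_EL[OF d] by blast
  qed
  have s0: "\<forall>j\<in>{1..n}. 0 \<le> Can E D j"
  proof
    fix j assume j: "j \<in> {1..n}"
    show "0 \<le> Can E D j"
    proof (cases "j \<in> E")
      case True
      then show ?thesis using Can_E_start[OF True] j H_nonneg[of p E D "j-1"] by simp
    next
      case False
      then have "j \<in> LL E" using mem[OF j] by blast
      then show ?thesis using Can_L T12 T1nn by (simp add: sum_nonneg)
    qed
  qed
  have no: "\<forall>i\<in>{1..n}. \<forall>j\<in>{1..n}. i \<noteq> j \<longrightarrow> Cs p (Can E D) i \<le> Can E D j \<or> Cs p (Can E D) j \<le> Can E D i"
  proof (intro ballI impI)
    fix i j assume i: "i \<in> {1..n}" and j: "j \<in> {1..n}" and ij: "i \<noteq> j"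
    show "Cs p (Can E D) i \<le> Can E D j \<or> Cs p (Can E D) j \<le> Can E D i"
    proof (cases "i < j")
      case True then show ?thesis using ord[OF i j] by blast
    next
      case False then have "j < i" using ij by simp
      then show ?thesis using ord[OF j i] by blast
    qed
  qed
  have each: "\<forall>j\<in>{1..n}. Cs p (Can E D) j \<le> real_of_int T1 \<or> real_of_int T2 \<le> Can E D j"
  proof
    fix j assume j: "j \<in> {1..n}"
    show "Cs p (Can E D) j \<le> real_of_int T1 \<or> real_of_int T2 \<le> Can E D j"
    proof (cases "j \<in> E")
      case True then show ?thesis using Cs_Can_E[OF True] H_le_T1[OF d] j by simp
    next
      case False
      then have "j \<in> LL E" using mem[OF j] by blast
      then show ?thesis using Can_L by (simp add: sum_nonneg)
    qed
  qed
  show ?thesis unfolding is_schedule_def using s0 no each by blast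
qed

lemma dev_Can: "dm E D \<Longrightarrow> j \<in> {1..n} \<Longrightarrow> dev p (Can E D) j \<le> D"
proof -
  assume d: "dm E D" and j: "j \<in> {1..n}"
  show ?thesis
  proof (cases "j \<in> E")
    case True
    have "Cpi p j - D \<le> H p E D j" using H_ge_rel[OF True] j by simp
    moreover have "H p E D j \<le> Cpi p j" using H_le_Cpi d unfolding dm_def by blast
    ultimately show ?thesis unfolding dev_def using Cs_Can_E[OF True] by simp
  next
    case False
    then have jL: "j \<in> LL E" using j unfolding LL_def by simp
    show ?thesis unfolding dev_def using Cs_Can_L[OF jL] LC_dev_pos[OF d jL] LC_dev_le[OF d jL] by simp
  qed
qed

lemma Dmax_le: "(\<forall>j\<in>{1..n}. dev p S j \<le> D) \<Longrightarrow> Dmax n p S \<le> D"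
  unfolding Dmax_def using n1 by (subst Max_le_iff) auto

lemma dev_le_Dmax: "j \<in> {1..n} \<Longrightarrow> dev p S j \<le> Dmax n p S"
  unfolding Dmax_def by (rule Max_ge) auto

lemma Dmax_nonneg: "0 \<le> Dmax n p S"
  using dev_le_Dmax[of 1 S] n1 unfolding dev_def by force

lemma feas_Can: "dm E D \<Longrightarrow> feasible n p T1 T2 k (Can E D)"
proof -
  assume d: "dm E D"
  have "Dmax n p (Can E D) \<le> D" using dev_Can[OF d] by (intro Dmax_le) blast
  then show ?thesis unfolding feasible_def using sched_Can[OF d] d unfolding dm_def by auto
qed

lemma sum_split: "E \<subseteq> {1..n} \<Longrightarrow> (\<Sum>j\<in>{1..n}. f j) = (\<Sum>j\<in>E. f j) + (\<Sum>j\<in>LL E. (f j :: real))"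
proof -
  assume E: "E \<subseteq> {1..n}"
  have "(\<Sum>j\<in>{1..n}. f j) = (\<Sum>j\<in>{1..n} - E. f j) + (\<Sum>j\<in>E. f j)"
    by (rule sum.subset_diff[OF E]) simp
  then show ?thesis unfolding LL_def by simp
qed

lemma cost_Can: "dm E D \<Longrightarrow> cost n p w \<mu> (Can E D) \<le> fv E D"
proof -
  assume d: "dm E D"
  have E: "E \<subseteq> {1..n}" using d unfolding dm_def by simp
  have s: "(\<Sum>j\<in>{1..n}. real (w j) * Cs p (Can E D) j)
     = (\<Sum>j\<in>E. real (w j) * H p E D j) + (\<Sum>j\<in>LL E. real (w j) * LC E j)"
    using sum_split[OF E, of "\<lambda>j. real (w j) * Cs p (Can E D) j"] Cs_Can_E Cs_Can_L by simp
  have "Dmax n p (Can E D) \<le> D" using dev_Can[OF d] by (intro Dmax_le) blast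
  moreover have "0 \<le> (of_rat \<mu> :: real)" using mu_nonneg by simp
  ultimately have "of_rat \<mu> * Dmax n p (Can E D) \<le> of_rat \<mu> * D" by (simp add: mult_left_mono)
  then show ?thesis unfolding cost_def fv_def using s by simp
qed

end



context inst begin

lemma LB:
  assumes f: "feasible n p T1 T2 k S"
  shows "dm (earlier n p T1 S) (Dmax n p S) \<and> fv (earlier n p T1 S) (Dmax n p S) \<le> cost n p w \<mu> S"
proof -
  define E where "E = earlier n p T1 S"
  define D where "D = Dmax n p S"
  have sch: "is_schedule n p T1 T2 S" and Dk: "D \<le> real_of_int k" using f unfolding feasible_def D_def by auto
  have E1: "E \<subseteq> {1..n}" unfolding E_def earlier_def by auto
  have fE: "finite E" using E1 finite_subset by blast
  have E0: "0 \<notin> E" using E1 by auto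
  have LLs: "LL E \<subseteq> {1..n}" unfolding LL_def by auto
  have S0: "\<forall>j\<in>{1..n}. 0 \<le> S j" using sch unfolding is_schedule_def by blast
  have nov: "\<And>A. A \<subseteq> {1..n} \<Longrightarrow> nonov A p S"
    using sch unfolding is_schedule_def nonov_def Cs_def by blast
  have LT2: "\<forall>j\<in>LL E. real_of_int T2 \<le> S j"
  proof
    fix j assume j: "j \<in> LL E"
    then have "j \<in> {1..n}" "\<not> Cs p S j \<le> real_of_int T1" unfolding LL_def E_def earlier_def by auto
    then show "real_of_int T2 \<le> S j" using sch unfolding is_schedule_def by blast
  qed
  have devD: "\<forall>j\<in>{1..n}. \<bar>S j + real (p j) - Cpi p j\<bar> \<le> D"
    using dev_le_Dmax unfolding D_def dev_def Cs_def by blast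
  have rel: "\<forall>j\<in>E. Cpi p j - D \<le> S j + real (p j)"
  proof
    fix j assume "j \<in> E" then have "j \<in> {1..n}" using E1 by blast
    then show "Cpi p j - D \<le> S j + real (p j)" using devD by force
  qed
  have pE: "\<forall>j\<in>E. p j > 0" using pos_p E1 by blast
  have wE: "\<forall>i\<in>E. \<forall>j\<in>E. i \<le> j \<longrightarrow> p i * w j \<le> p j * w i" using wspt E1 by blast
  have Hn: "H p E D n \<le> real_of_int T1"
  proof (cases "E = {}")
    case True then show ?thesis using H_zero[of E n p D] T1nn by simp
  next
    case False
    then obtain x where x: "x \<in> E" by auto
    then have "x \<le> n" using E1 by auto
    then obtain j where j: "j \<in> E" "H p E D n \<le> S j + real (p j)"
      using LB_E_mk[OF fE E0 pE nov[OF E1] _ rel x] S0 E1 by blast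
    then have "S j + real (p j) \<le> real_of_int T1" unfolding E_def earlier_def Cs_def by auto
    then show ?thesis using j by simp
  qed
  have Lc: "\<forall>j\<in>LL E. real_of_int T2 - Spi p j \<le> D"
  proof
    fix j assume j: "j \<in> LL E"
    then have j1: "j \<in> {1..n}" using LLs by blast
    then have "S j + real (p j) - Cpi p j \<le> D" using devD by force
    moreover have "Cpi p j = Spi p j + real (p j)" using Cpi_Spi j1 by simp
    ultimately show "real_of_int T2 - Spi p j \<le> D" using LT2 j by force
  qed
  have D0: "0 \<le> D" unfolding D_def by (rule Dmax_nonneg)
  have dmE: "dm E D" unfolding dm_def using E1 D0 Dk Hn Lc by blast
  have sE: "(\<Sum>j\<in>E. real (w j) * H p E D j) \<le> (\<Sum>j\<in>E. real (w j) * (S j + real (p j)))"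
  proof -
    have "{j\<in>E. j \<le> n} = E" using E1 by auto
    then show ?thesis using LB_E[OF fE E0 pE wE nov[OF E1] _ rel, of n] S0 E1 by auto
  qed
  have sL: "(\<Sum>j\<in>LL E. real (w j) * LC E j) \<le> (\<Sum>j\<in>LL E. real (w j) * (S j + real (p j)))"
  proof -
    have "finite (LL E)" unfolding LL_def by simp
    moreover have "\<forall>j\<in>LL E. p j > 0" using pos_p LLs by blast
    moreover have "\<forall>i\<in>LL E. \<forall>j\<in>LL E. i \<le> j \<longrightarrow> p i * w j \<le> p j * w i" using wspt LLs by blast
    ultimately show ?thesis unfolding LC_def using pack_wsum[of "LL E" p S "real_of_int T2" w] nov[OF LLs] LT2
      by blast
  qed
  have "cost n p w \<mu> S = of_rat \<mu> * D + (\<Sum>j\<in>E. real (w j) * (S j + real (p j))) + (\<Sum>j\<in>LL E. real (w j) * (S j + real (p j)))"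
    unfolding cost_def D_def using sum_split[OF E1, of "\<lambda>j. real (w j) * Cs p S j"] unfolding Cs_def by simp
  then have "fv E D \<le> cost n p w \<mu> S" unfolding fv_def using sE sL by simp
  then show ?thesis using dmE unfolding E_def D_def by simp
qed

end



context inst begin

lemma dm_set: "E \<subseteq> {1..n} \<Longrightarrow> {D. dm E D} = ({0..real_of_int k} \<inter> {D. H p E D n \<le> real_of_int T1}) \<inter> (\<Inter>j\<in>LL E. {real_of_int T2 - Spi p j..})"
  unfolding dm_def by auto

lemma dm_compact: "E \<subseteq> {1..n} \<Longrightarrow> compact {D. dm E D}"
proof -
  assume E: "E \<subseteq> {1..n}"
  have c1: "closed {D. H p E D n \<le> real_of_int T1}"
    by (rule closed_Collect_le) (rule H_cont, rule continuous_on_const)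
  have c2: "closed (\<Inter>j\<in>LL E. {real_of_int T2 - Spi p j..})" by (intro closed_INT ballI closed_atLeast)
  show ?thesis unfolding dm_set[OF E]
    by (intro compact_Int_closed compact_Icc c1 c2)
qed

lemma fv_cont: "continuous_on A (\<lambda>D. fv E D)"
proof -
  have "continuous_on A (\<lambda>D. of_rat \<mu> * D + (\<Sum>j\<in>E. real (w j) * H p E D j) + (\<Sum>j\<in>LL E. real (w j) * LC E j))"
  proof (intro continuous_on_add continuous_on_mult continuous_on_const continuous_on_id continuous_on_sum)
    fix j show "continuous_on A (\<lambda>D. H p E D j)" using H_cont continuous_on_subset by blast
  qed
  then show ?thesis unfolding fv_def by simp
qed

lemma ex_min_E: "E \<subseteq> {1..n} \<Longrightarrow> dm E D0 \<Longrightarrow> \<exists>D. dm E D \<and> (\<forall>D'. dm E D' \<longrightarrow> fv E D \<le> fv E D')"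
proof -
  assume E: "E \<subseteq> {1..n}" and d: "dm E D0"
  have "{D. dm E D} \<noteq> {}" using d by auto
  from continuous_attains_inf[OF dm_compact[OF E] this fv_cont]
  show ?thesis by auto
qed

lemma ex_min:
  assumes ex: "dm E1 D1"
  shows "\<exists>E D. dm E D \<and> (\<forall>E' D'. dm E' D' \<longrightarrow> fv E D \<le> fv E' D')"
proof -
  define EE where "EE = {E. E \<subseteq> {1..n} \<and> (\<exists>D. dm E D)}"
  have fEE: "finite EE" unfolding EE_def
    by (rule finite_subset[of _ "Pow {1..n}"]) auto
  have neEE: "EE \<noteq> {}" using ex unfolding EE_def dm_def by auto
  define g where "g E = fv E (SOME D. dm E D \<and> (\<forall>D'. dm E D' \<longrightarrow> fv E D \<le> fv E D'))" for E
  have gprop: "\<And>E. E \<in> EE \<Longrightarrow> dm E (SOME D. dm E D \<and> (\<forall>D'. dm E D' \<longrightarrow> fv E D \<le> fv E D'))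
      \<and> (\<forall>D'. dm E D' \<longrightarrow> g E \<le> fv E D')"
  proof -
    fix E assume "E \<in> EE"
    then have "\<exists>D. dm E D \<and> (\<forall>D'. dm E D' \<longrightarrow> fv E D \<le> fv E D')"
      unfolding EE_def using ex_min_E by blast
    from someI_ex[OF this] show "?thesis E" unfolding g_def by blast
  qed
  obtain E0 where E0: "E0 \<in> EE" "\<forall>x\<in>EE. - g x \<le> - g E0" using ex_argmax[OF fEE neEE, of "\<lambda>E. - g E"] by blast
  define D0 where "D0 = (SOME D. dm E0 D \<and> (\<forall>D'. dm E0 D' \<longrightarrow> fv E0 D \<le> fv E0 D'))"
  have "dm E0 D0" using gprop[OF E0(1)] D0_def by simp
  moreover have "\<forall>E' D'. dm E' D' \<longrightarrow> fv E0 D0 \<le> fv E' D'"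
  proof (intro allI impI)
    fix E' D' assume d: "dm E' D'"
    then have "E' \<in> EE" unfolding EE_def dm_def by auto
    then have "g E0 \<le> g E'" using E0 by force
    also have "g E' \<le> fv E' D'" using gprop[OF \<open>E' \<in> EE\<close>] d by blast
    finally show "fv E0 D0 \<le> fv E' D'" unfolding g_def D0_def by simp
  qed
  ultimately show ?thesis by blast
qed

end



context inst begin

definition gap :: "nat set \<Rightarrow> real \<Rightarrow> nat \<Rightarrow> bool" where
  "gap E D g \<longleftrightarrow> g \<in> E \<and> H p E D (g-1) < Spi p g - D"

lemma gap_tight:
  assumes d: "dm E D" and g: "gap E D g"
  shows "g \<le> j \<Longrightarrow> {g..j} \<subseteq> E \<Longrightarrow> H p E D j = Cpi p j - D"
proof (induction j)
  case 0
  have "1 \<le> g" using g dm_E1[OF d] unfolding gap_def by blast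
  then show ?case using 0 by simp
next
  case (Suc j)
  show ?case
  proof (cases "g = Suc j")
    case True
    have gE: "g \<in> E" and lt: "H p E D (g-1) < Spi p g - D" using g unfolding gap_def by auto
    have g1: "1 \<le> g" using dm_E1[OF d gE] by blast
    have "H p E D g = max (H p E D (g-1)) (Spi p g - D) + real (p g)" using H_in[OF gE g1] .
    also have "\<dots> = Spi p g - D + real (p g)" using lt by simp
    finally show ?thesis using Cpi_Spi[OF g1, of p] True by simp
  next
    case False
    then have gj: "g \<le> j" using Suc.prems by simp
    have sub: "{g..j} \<subseteq> E" using Suc.prems by auto
    have IH: "H p E D j = Cpi p j - D" using Suc.IH[OF gj sub] .
    have SE: "Suc j \<in> E" using Suc.prems by auto
    have "H p E D (Suc j) = max (Cpi p j - D) (Spi p (Suc j) - D) + real (p (Suc j))" using SE IH by simp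
    also have "\<dots> = Cpi p (Suc j) - D" using Spi_Suc[of p j] Cpi_Suc[of p j] by simp
    finally show ?thesis .
  qed
qed

lemma gap_ge1: "dm E D \<Longrightarrow> gap E D g \<Longrightarrow> 1 \<le> g \<and> g \<le> n"
  using dm_E1 unfolding gap_def by blast

lemma first_missing:
  assumes d: "dm E D" and g: "gap E D g" and i: "i \<notin> E" "g < i"
  obtains i0 where "i0 \<notin> E" "g < i0" "i0 \<le> i" "H p E D (i0 - 1) = Cpi p (i0 - 1) - D"
proof -
  define i0 where "i0 = (LEAST x. g < x \<and> x \<notin> E)"
  have P: "g < i0 \<and> i0 \<notin> E" unfolding i0_def by (rule LeastI[of _ i]) (use i in simp)
  have le: "i0 \<le> i" unfolding i0_def by (rule Least_le) (use i in simp)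
  have gE: "g \<in> E" using g unfolding gap_def by simp
  have sub: "{g..i0-1} \<subseteq> E"
  proof
    fix x assume x: "x \<in> {g..i0-1}"
    show "x \<in> E"
    proof (cases "x = g")
      case True then show ?thesis using gE by simp
    next
      case False
      then have "g < x" "x < i0" using x P by auto
      then show ?thesis using not_less_Least[of x "\<lambda>x. g < x \<and> x \<notin> E"] unfolding i0_def by blast
    qed
  qed
  have gi: "g \<le> i0 - 1" using P by linarith
  have "H p E D (i0 - 1) = Cpi p (i0 - 1) - D" using gap_tight[OF d g gi sub] .
  then show ?thesis using that P le by blast
qed

lemma second_gap:
  assumes d: "dm E D" and g: "gap E D g" and i: "i \<notin> E" "g < i" and e: "e \<in> E" "i < e"
  shows "\<exists>g'. gap E D g' \<and> g < g'"
proof -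
  obtain i0 where i0: "i0 \<notin> E" "g < i0" "i0 \<le> i" and Hi0: "H p E D (i0 - 1) = Cpi p (i0 - 1) - D"
    using first_missing[OF d g i] by blast
  define e0 where "e0 = (LEAST x. x \<in> E \<and> i0 < x)"
  have P: "e0 \<in> E \<and> i0 < e0" unfolding e0_def by (rule LeastI[of _ e]) (use e i0 in simp)
  have none: "\<forall>x. i0 - 1 < x \<and> x \<le> e0 - 1 \<longrightarrow> x \<notin> E"
  proof (intro allI impI)
    fix x assume x: "i0 - 1 < x \<and> x \<le> e0 - 1"
    show "x \<notin> E"
    proof (cases "x = i0")
      case True then show ?thesis using i0 by simp
    next
      case False
      then have "i0 < x" "x < e0" using x P by auto
      then show ?thesis using not_less_Least[of x "\<lambda>x. x \<in> E \<and> i0 < x"] unfolding e0_def by blast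
    qed
  qed
  have ie: "i0 - 1 \<le> e0 - 1" using P by linarith
  have He: "H p E D (e0 - 1) = H p E D (i0 - 1)" by (rule H_const[OF none ie])
  have e0n: "e0 \<le> n" using dm_E1[OF d] P by blast
  have i0n: "i0 \<in> {1..n}" using i0 P e0n by auto
  have "Cpi p (i0 - 1) = Spi p i0" using Spi_Suc[of p "i0-1"] i0n by simp
  moreover have "Spi p i0 + real (p i0) \<le> Spi p e0"
    using Cpi_Spi[of i0 p] i0n Cpi_le_Spi[of i0 e0 p] P by simp
  moreover have "0 < p i0" using pos_p i0n by blast
  ultimately have "H p E D (e0 - 1) < Spi p e0 - D" using He Hi0 by simp
  then have "gap E D e0" unfolding gap_def using P by simp
  then show ?thesis using P i0 by auto
qed

lemma gap_T2:
  assumes d: "dm E D" and g: "gap E D g"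
  shows "real_of_int T2 \<le> Spi p g"
proof -
  have gE: "g \<in> E" and lt: "H p E D (g-1) < Spi p g - D" using g unfolding gap_def by auto
  have D0: "0 \<le> D" using d unfolding dm_def by simp
  define m where "m = Min (LL E)"
  have fL: "finite (LL E)" unfolding LL_def by simp
  have mL: "m \<in> LL E" using Min_in[OF fL LL_ne[OF d]] m_def by simp
  have m1: "1 \<le> m" "m \<le> n" "m \<notin> E" using mL unfolding LL_def by auto
  have below: "\<And>i. 1 \<le> i \<Longrightarrow> i < m \<Longrightarrow> i \<in> E"
  proof -
    fix i assume "1 \<le> i" "i < m"
    then show "i \<in> E" using Min_le[OF fL, of i] m_def m1 unfolding LL_def by fastforce
  qed
  have Hs: "real (\<Sum>i\<in>{i\<in>E. i \<le> g - 1}. p i) \<le> H p E D (g-1)" using H_ge_sum dm_E0[OF d] by blast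
  have mD: "real_of_int T2 - Spi p m \<le> D" using d mL unfolding dm_def by blast
  show ?thesis
  proof (cases "g < m")
    case True
    have "{1..<g} \<subseteq> {i\<in>E. i \<le> g - 1}" using below True by auto
    then have "Spi p g \<le> real (\<Sum>i\<in>{i\<in>E. i \<le> g - 1}. p i)"
      unfolding Spi_def by (intro of_nat_mono sum_mono2) auto
    then show ?thesis using Hs lt D0 by simp
  next
    case False
    then have mg: "m < g" using gE m1 by (cases "m = g") auto
    have "{1..<m} \<subseteq> {i\<in>E. i \<le> g - 1}" using below mg by auto
    then have "Spi p m \<le> real (\<Sum>i\<in>{i\<in>E. i \<le> g - 1}. p i)"
      unfolding Spi_def by (intro of_nat_mono sum_mono2) auto
    then show ?thesis using Hs lt mD by simp
  qed
qed

lemma gap_block: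
  assumes d: "dm E D" and g: "gap E D g" and uq: "\<forall>g'. gap E D g' \<longrightarrow> g' = g"
    and j: "j \<in> E" "g \<le> j"
  shows "{g..j} \<subseteq> E" "H p E D j = Cpi p j - D"
proof -
  show sub: "{g..j} \<subseteq> E"
  proof
    fix i assume i: "i \<in> {g..j}"
    show "i \<in> E"
    proof (rule ccontr)
      assume ni: "i \<notin> E"
      have gE: "g \<in> E" using g unfolding gap_def by simp
      then have "g < i" "i < j" using i ni j by (auto simp: le_less)
      then obtain g' where "gap E D g'" "g < g'" using second_gap[OF d g ni _ j(1)] by blast
      then show False using uq by auto
    qed
  qed
  show "H p E D j = Cpi p j - D" by (rule gap_tight[OF d g j(2) sub])
qed

end



context inst begin

lemma two_gaps_improve:
  assumes d: "dm E D" and g1: "gap E D g1" and g2: "gap E D g2" and lt: "g1 < g2"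
  shows "\<exists>E'. dm E' D \<and> fv E' D < fv E D"
proof -
  have g1E: "g1 \<in> E" and g2E: "g2 \<in> E" and g2lt: "H p E D (g2-1) < Spi p g2 - D"
    using g1 g2 unfolding gap_def by auto
  have g1b: "1 \<le> g1" and g2b: "g2 \<le> n" using gap_ge1[OF d g1] gap_ge1[OF d g2] by auto
  have "\<exists>i. i \<notin> E \<and> g1 < i \<and> i < g2"
  proof (rule ccontr)
    assume na: "\<not> (\<exists>i. i \<notin> E \<and> g1 < i \<and> i < g2)"
    have sub: "{g1..g2-1} \<subseteq> E"
    proof
      fix x assume x: "x \<in> {g1..g2-1}"
      show "x \<in> E"
      proof (cases "x = g1")
        case True then show ?thesis using g1E by simp
      next
        case False then have "g1 < x" "x < g2" using x lt by auto
        then show ?thesis using na by blast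
      qed
    qed
    have "g1 \<le> g2 - 1" using lt by linarith
    then have "H p E D (g2-1) = Cpi p (g2-1) - D" using gap_tight[OF d g1 _ sub] by blast
    moreover have "Cpi p (g2-1) = Spi p g2" using Spi_Suc[of p "g2-1"] lt by simp
    ultimately show False using g2lt by simp
  qed
  then obtain i where i: "i \<notin> E" "g1 < i" "i < g2" by blast
  obtain i0 where i0: "i0 \<notin> E" "g1 < i0" "i0 \<le> i" and Hi0: "H p E D (i0 - 1) = Cpi p (i0 - 1) - D"
    using first_missing[OF d g1 i(1,2)] by blast
  have i0n: "1 \<le> i0" "i0 < g2" "i0 \<le> n" using i0 i g1b g2b by auto
  have Hi0': "H p E D (i0 - 1) = Spi p i0 - D" using Hi0 Spi_Suc[of p "i0-1"] i0n by simp
  define E' where "E' = insert i0 E"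
  define c where "c = Cpi p i0 - D"
  have cS: "c = Spi p i0 - D + real (p i0)" using Cpi_Spi[of i0 p] i0n c_def by simp
  have pi0: "0 < p i0" using pos_p i0n by auto
  have below: "\<And>j. j < i0 \<Longrightarrow> H p E' D j = H p E D j"
  proof -
    fix j show "j < i0 \<Longrightarrow> H p E' D j = H p E D j"
    proof (induction j)
      case (Suc j)
      have "Suc j \<in> E' \<longleftrightarrow> Suc j \<in> E" using Suc.prems E'_def by auto
      then show ?case using Suc by simp
    qed simp
  qed
  have above: "\<And>j. i0 \<le> j \<Longrightarrow> H p E' D j = max (H p E D j) c"
  proof -
    fix j show "i0 \<le> j \<Longrightarrow> H p E' D j = max (H p E D j) c"
    proof (induction j)
      case 0 then show ?case using i0n by simp
    next
      case (Suc j)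
      show ?case
      proof (cases "Suc j = i0")
        case True
        have "i0 \<in> E'" unfolding E'_def by simp
        then have "H p E' D i0 = max (H p E' D (i0-1)) (Spi p i0 - D) + real (p i0)"
          using H_in[of i0 E' p D] i0n by blast
        moreover have "H p E' D (i0-1) = H p E D (i0 - 1)" using below[of "i0-1"] i0n by simp
        ultimately have "H p E' D i0 = c" using Hi0' cS by simp
        then have "H p E' D (Suc j) = c" using True by simp
        moreover have "H p E D (Suc j) = H p E D (i0 - 1)" using H_notin[OF i0(1) i0n(1), of p D] True by simp
        ultimately show ?thesis using Hi0' cS pi0 by simp
      next
        case False
        then have ij: "i0 \<le> j" using Suc.prems by simp
        have IH: "H p E' D j = max (H p E D j) c" using Suc.IH[OF ij] .
        show ?thesis
        proof (cases "Suc j \<in> E")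
          case True
          have sp: "c \<le> Spi p (Suc j) - D" using Spi_Suc[of p j] Cpi_mono[OF ij, of p] c_def by simp
          have "H p E' D (Suc j) = max (max (H p E D j) c) (Spi p (Suc j) - D) + real (p (Suc j))"
            using True IH E'_def by simp
          also have "\<dots> = max (H p E D j) (Spi p (Suc j) - D) + real (p (Suc j))" using sp by (simp add: max_def)
          also have "\<dots> = H p E D (Suc j)" using True by simp
          finally have "H p E' D (Suc j) = H p E D (Suc j)" .
          moreover have "c \<le> H p E D (Suc j)" using True sp by simp
          ultimately show ?thesis by simp
        next
          case False
          then have "Suc j \<notin> E'" using \<open>Suc j \<noteq> i0\<close> E'_def by simp
          then show ?thesis using False IH by simp
        qed
      qed
    qed
  qed
  have Hi0c: "H p E' D i0 = c"
  proof -
    have "H p E D i0 = H p E D (i0 - 1)" using H_notin[OF i0(1) i0n(1)] .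
    then show ?thesis using above[of i0] Hi0' cS pi0 by simp
  qed
  have sameE: "\<And>j. j \<in> E \<Longrightarrow> H p E' D j = H p E D j"
  proof -
    fix j assume j: "j \<in> E"
    show "H p E' D j = H p E D j"
    proof (cases "j < i0")
      case True then show ?thesis using below by simp
    next
      case False
      then have ij: "i0 \<le> j" by simp
      have j1: "1 \<le> j" using dm_E1[OF d j] by simp
      have "c \<le> H p E D j" using H_ge_rel[OF j j1, of p D] Cpi_mono[OF ij, of p] c_def by simp
      then show ?thesis using above[OF ij] by simp
    qed
  qed
  have Hn: "H p E' D n = H p E D n"
  proof -
    have "Cpi p g2 - D \<le> H p E D g2" using H_ge_rel[OF g2E] gap_ge1[OF d g2] by simp
    moreover have "H p E D g2 \<le> H p E D n" using H_mono g2b by blast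
    moreover have "Cpi p i0 \<le> Cpi p g2" using Cpi_mono i0n by simp
    ultimately have "c \<le> H p E D n" using c_def by simp
    then show ?thesis using above[of n] i0n by simp
  qed
  have LLsub: "LL E' \<subseteq> LL E" unfolding LL_def E'_def by auto
  have LLeq: "LL E = insert i0 (LL E')" "i0 \<notin> LL E'" unfolding LL_def E'_def using i0 i0n by auto
  have dm': "dm E' D" using d Hn LLsub i0n unfolding dm_def E'_def by auto
  have fE: "finite E" using dm_fin[OF d] .
  have sE': "(\<Sum>j\<in>E'. real (w j) * H p E' D j) = real (w i0) * c + (\<Sum>j\<in>E. real (w j) * H p E D j)"
  proof -
    have "(\<Sum>j\<in>E'. real (w j) * H p E' D j) = real (w i0) * H p E' D i0 + (\<Sum>j\<in>E. real (w j) * H p E' D j)"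
      unfolding E'_def using fE i0 by simp
    also have "(\<Sum>j\<in>E. real (w j) * H p E' D j) = (\<Sum>j\<in>E. real (w j) * H p E D j)"
      by (rule sum.cong) (simp_all add: sameE)
    finally show ?thesis using Hi0c by simp
  qed
  have fL': "finite (LL E')" unfolding LL_def by simp
  have LCle: "\<And>j. LC E' j \<le> LC E j"
  proof -
    fix j
    have "(\<Sum>i\<in>{i\<in>LL E'. i \<le> j}. real (p i)) \<le> (\<Sum>i\<in>{i\<in>LL E. i \<le> j}. real (p i))"
      by (rule sum_mono2) (use LLsub in \<open>auto simp: LL_def\<close>)
    then show "LC E' j \<le> LC E j" unfolding LC_def by simp
  qed
  have sL: "(\<Sum>j\<in>LL E'. real (w j) * LC E' j) \<le> (\<Sum>j\<in>LL E'. real (w j) * LC E j)"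
    by (rule sum_mono) (simp add: LCle mult_left_mono)
  have sL2: "(\<Sum>j\<in>LL E. real (w j) * LC E j) = real (w i0) * LC E i0 + (\<Sum>j\<in>LL E'. real (w j) * LC E j)"
    unfolding LLeq(1) using fL' LLeq(2) by simp
  have "c \<le> real_of_int T1"
  proof -
    have "H p E' D i0 \<le> H p E' D n" using H_mono i0n by blast
    then show ?thesis using Hi0c Hn d unfolding dm_def by simp
  qed
  moreover have "real_of_int T2 < LC E i0" using LC_gt LLeq(1) by simp
  ultimately have "c < LC E i0" using T12 by simp
  moreover have "0 < w i0" using pos_w i0n by simp
  ultimately have "real (w i0) * c < real (w i0) * LC E i0" by simp
  then have "fv E' D < fv E D" unfolding fv_def using sE' sL sL2 by simp
  then show ?thesis using dm' by blast
qed

lemma idle_char: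
  assumes d: "dm E D" and ip: "idle_period E p (Can E D) a b"
  shows "\<exists>g. gap E D g \<and> a = H p E D (g-1) \<and> b = Spi p g - D"
proof -
  have neE: "E \<noteq> {}" and ab: "a < b" "0 \<le> a" and bM: "b \<le> Max (Cs p (Can E D) ` E)"
    and fr: "free_int E p (Can E D) a b"
    and mx: "\<And>a' b'. a' \<le> a \<Longrightarrow> b \<le> b' \<Longrightarrow> 0 \<le> a' \<Longrightarrow> b' \<le> Max (Cs p (Can E D) ` E) \<Longrightarrow>
       free_int E p (Can E D) a' b' \<Longrightarrow> a' = a \<and> b' = b"
    using ip unfolding idle_period_def by blast+
  have fE: "finite E" using dm_fin[OF d] .
  have "Max (Cs p (Can E D) ` E) \<in> Cs p (Can E D) ` E" using fE neE by simp
  then obtain j where j: "j \<in> E" "Cs p (Can E D) j = Max (Cs p (Can E D) ` E)" by auto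
  then have ex: "j \<in> E \<and> a < H p E D j" using bM ab Cs_Can_E[OF j(1)] by simp
  define j0 where "j0 = (LEAST x. x \<in> E \<and> a < H p E D x)"
  have P: "j0 \<in> E \<and> a < H p E D j0" unfolding j0_def by (rule LeastI[of _ j]) (rule ex)
  have lessa: "\<And>x. x \<in> E \<Longrightarrow> x < j0 \<Longrightarrow> H p E D x \<le> a"
    using not_less_Least[of _ "\<lambda>x. x \<in> E \<and> a < H p E D x"] unfolding j0_def by fastforce
  have j01: "1 \<le> j0" using dm_E1[OF d] P by blast
  have Hprev: "H p E D (j0 - 1) \<le> a"
  proof -
    have "H p E D (j0 - 1) = 0 \<or> (\<exists>i\<in>E. 1 \<le> i \<and> i \<le> j0 - 1 \<and> H p E D (j0 - 1) = H p E D i)"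
      by (rule H_prev)
    then show ?thesis
    proof
      assume "H p E D (j0 - 1) = 0" then show ?thesis using ab by simp
    next
      assume "\<exists>i\<in>E. 1 \<le> i \<and> i \<le> j0 - 1 \<and> H p E D (j0 - 1) = H p E D i"
      then obtain i where "i \<in> E" "i \<le> j0 - 1" "H p E D (j0 - 1) = H p E D i" by blast
      then show ?thesis using lessa[of i] j01 by simp
    qed
  qed
  have st: "Can E D j0 = max (H p E D (j0-1)) (Spi p j0 - D)" using Can_E_start P j01 by blast
  have "Cs p (Can E D) j0 \<le> a \<or> b \<le> Can E D j0" using fr P unfolding free_int_def by blast
  then have bC: "b \<le> Can E D j0" using P Cs_Can_E by force
  then have bS: "b \<le> Spi p j0 - D" using st Hprev ab by (auto simp: max_def split: if_splits)
  have gj: "gap E D j0" unfolding gap_def using P Hprev ab bS by simp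
  have stj: "Can E D j0 = Spi p j0 - D" using st Hprev ab bS by simp
  have le1: "Spi p j0 - D \<le> Max (Cs p (Can E D) ` E)"
  proof -
    have "Cs p (Can E D) j0 \<le> Max (Cs p (Can E D) ` E)" using fE P by simp
    then show ?thesis using stj unfolding Cs_def by simp
  qed
  have frt: "free_int E p (Can E D) (H p E D (j0-1)) (Spi p j0 - D)"
    unfolding free_int_def
  proof
    fix x assume x: "x \<in> E"
    show "Cs p (Can E D) x \<le> H p E D (j0-1) \<or> Spi p j0 - D \<le> Can E D x"
    proof (cases "x < j0")
      case True
      then have "H p E D x \<le> H p E D (j0-1)" by (intro H_mono) simp
      then show ?thesis using Cs_Can_E[OF x] by simp
    next
      case False
      show ?thesis
      proof (cases "x = j0")
        case True then show ?thesis using stj by simp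
      next
        case False
        then have jx: "j0 \<le> x - 1" using \<open>\<not> x < j0\<close> by simp
        have x1: "1 \<le> x" using dm_E1[OF d x] by simp
        have "H p E D j0 \<le> H p E D (x-1)" using H_mono[OF jx] .
        moreover have "H p E D (x-1) \<le> Can E D x" using Can_E_start[OF x x1] by simp
        moreover have "Spi p j0 - D \<le> H p E D j0" using stj Cs_Can_E[OF j(1)] P
          unfolding Cs_def Can_def by simp
        ultimately show ?thesis by simp
      qed
    qed
  qed
  have "H p E D (j0-1) = a \<and> Spi p j0 - D = b"
    by (rule mx[OF Hprev bS H_nonneg le1 frt])
  then show ?thesis using gj by blast
qed

end



context inst begin

lemma no_idle_L: "dm E D \<Longrightarrow> \<not> idles_after (LL E) p (Can E D) (real_of_int T2)"
proof
  assume d: "dm E D" and ia: "idles_after (LL E) p (Can E D) (real_of_int T2)"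
  then obtain a b where ab: "real_of_int T2 \<le> a" "a < b" "b \<le> Max (Cs p (Can E D) ` LL E)"
    and fr: "free_int (LL E) p (Can E D) a b" and ne: "LL E \<noteq> {}"
    unfolding idles_after_def by blast
  have fL: "finite (LL E)" unfolding LL_def by simp
  have "Max (Cs p (Can E D) ` LL E) \<in> Cs p (Can E D) ` LL E" using fL ne by simp
  then obtain j where j: "j \<in> LL E" "Cs p (Can E D) j = Max (Cs p (Can E D) ` LL E)" by auto
  then have ex: "j \<in> LL E \<and> a < LC E j" using ab Cs_Can_L[OF j(1)] by simp
  define j0 where "j0 = (LEAST x. x \<in> LL E \<and> a < LC E x)"
  have P: "j0 \<in> LL E \<and> a < LC E j0" unfolding j0_def by (rule LeastI[of _ j]) (rule ex)
  have lessa: "\<And>x. x \<in> LL E \<Longrightarrow> x < j0 \<Longrightarrow> LC E x \<le> a"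
  proof -
    fix x assume x: "x \<in> LL E" "x < j0"
    have "\<not> (x \<in> LL E \<and> a < LC E x)" using not_less_Least[of x "\<lambda>x. x \<in> LL E \<and> a < LC E x"] x(2)
      unfolding j0_def by blast
    then show "LC E x \<le> a" using x(1) by simp
  qed
  have C0: "Can E D j0 \<le> a"
  proof (cases "{x\<in>LL E. x < j0} = {}")
    case True
    have "Can E D j0 = real_of_int T2 + (\<Sum>i\<in>{x\<in>LL E. x < j0}. real (p i))" using Can_L[of j0 E D] P by blast
    also have "\<dots> = real_of_int T2" unfolding True by simp
    finally show ?thesis using ab by simp
  next
    case False
    define i where "i = Max {x\<in>LL E. x < j0}"
    have fi: "finite {x\<in>LL E. x < j0}" using fL by simp
    have iin: "i \<in> LL E" "i < j0" using Max_in[OF fi False] i_def by auto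
    have "{x\<in>LL E. x \<le> i} = {x\<in>LL E. x < j0}"
    proof
      show "{x\<in>LL E. x \<le> i} \<subseteq> {x\<in>LL E. x < j0}" using iin by auto
      show "{x\<in>LL E. x < j0} \<subseteq> {x\<in>LL E. x \<le> i}"
      proof
        fix x assume x: "x \<in> {x\<in>LL E. x < j0}"
        then have "x \<le> i" using Max_ge[OF fi x] i_def by simp
        then show "x \<in> {x\<in>LL E. x \<le> i}" using x by simp
      qed
    qed
    then have "Can E D j0 = LC E i" using Can_L[of j0 E D] P unfolding LC_def by simp
    then show ?thesis using lessa[OF iin] by simp
  qed
  have "Cs p (Can E D) j0 \<le> a \<or> b \<le> Can E D j0" using fr P unfolding free_int_def by blast
  moreover have "Cs p (Can E D) j0 = LC E j0" using Cs_Can_L[of j0 E D] P by simp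
  ultimately show False using P C0 ab by linarith
qed

lemma first_L_max:
  assumes d: "dm E D" and j: "j \<in> LL E" and mn: "\<forall>i\<in>LL E. Can E D j \<le> Can E D i" and i: "i \<in> LL E"
  shows "dev p (Can E D) i \<le> dev p (Can E D) j"
proof -
  have ji: "j \<le> i"
  proof (rule ccontr)
    assume "\<not> j \<le> i" then have ij: "i < j" by simp
    have "Cs p (Can E D) i \<le> Can E D j" using ord_LL[OF i j ij] .
    moreover have "0 < p i" using pos_p i unfolding LL_def by auto
    ultimately have "Can E D i < Can E D j" unfolding Cs_def by simp
    then show False using mn i by force
  qed
  have dv: "\<And>x. x \<in> LL E \<Longrightarrow> dev p (Can E D) x = real_of_int T2 - (\<Sum>y\<in>{y\<in>E. y \<le> x}. real (p y))"
  proof -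
    fix x assume x: "x \<in> LL E"
    have "0 < LC E x - Cpi p x" by (rule LC_dev_pos[OF d x])
    then have "dev p (Can E D) x = LC E x - Cpi p x" unfolding dev_def using Cs_Can_L[OF x] by simp
    then show "dev p (Can E D) x = real_of_int T2 - (\<Sum>y\<in>{y\<in>E. y \<le> x}. real (p y))"
      using LC_dev[OF d x] by simp
  qed
  have fE: "finite {y\<in>E. y \<le> i}" by simp
  have sub: "{y\<in>E. y \<le> j} \<subseteq> {y\<in>E. y \<le> i}" using ji by auto
  have "(\<Sum>y\<in>{y\<in>E. y \<le> j}. real (p y)) \<le> (\<Sum>y\<in>{y\<in>E. y \<le> i}. real (p y))"
    by (rule sum_mono2[OF fE sub]) simp
  then show ?thesis using dv[OF i] dv[OF j] by simp
qed

end



theorem lemma2: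
  fixes n :: nat and p w :: "nat \<Rightarrow> nat" and T1 T2 k :: int and \<mu> :: rat
  assumes pos_p: "\<forall>j\<in>{1..n}. p j > 0"
    and pos_w: "\<forall>j\<in>{1..n}. w j > 0"
    and wspt: "\<forall>i\<in>{1..n}. \<forall>j\<in>{1..n}. i \<le> j \<longrightarrow> p i * w j \<le> p j * w i"
    and T1_nonneg: "0 \<le> T1" and T1_T2: "T1 < T2"
    and mu_nonneg: "0 \<le> \<mu>"
    and some_late: "\<exists>j\<in>{1..n}. Cpi p j > real_of_int T1"
    and pmin: "real (Min (p ` {1..n})) \<le> real_of_int T1"
    and T1_lt_P: "real_of_int T1 < real (\<Sum>j\<in>{1..n}. p j)"
    and j1: "real_of_int T2 - Spi p (LEAST j. j \<in> {1..n} \<and> Cpi p j > real_of_int T1) \<le> real_of_int k"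
    and has_feasible: "\<exists>S. feasible n p T1 T2 k S"
  shows "\<exists>S. optimal n p w T1 T2 k \<mu> S
    \<and> (\<forall>j\<in>earlier n p T1 S. Cs p S j \<le> Cpi p j)
    \<and> (\<forall>a b a' b'. idle_period (earlier n p T1 S) p S a b \<and> idle_period (earlier n p T1 S) p S a' b'
          \<longrightarrow> a = a' \<and> b = b')
    \<and> (\<forall>a b. idle_period (earlier n p T1 S) p S a b \<longrightarrow>
          (\<forall>j\<in>earlier n p T1 S. S j \<ge> b \<longrightarrow> Cpi p j - Cs p S j = Dmax n p S)
        \<and> (\<forall>x y z. x \<in> earlier n p T1 S \<and> S x \<ge> b \<and> z \<in> earlier n p T1 S \<and> S z \<ge> b \<and> x \<le> y \<and> y \<le> z
              \<longrightarrow> y \<in> earlier n p T1 S \<and> S y \<ge> b)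
        \<and> (\<forall>j\<in>earlier n p T1 S. S j = b \<longrightarrow> Spi p j \<ge> real_of_int T2))
    \<and> \<not> idles_after (later n p T2 S) p S (real_of_int T2)
    \<and> (\<forall>j\<in>later n p T2 S. (\<forall>i\<in>later n p T2 S. S j \<le> S i) \<longrightarrow>
          (\<forall>i\<in>later n p T2 S. dev p S i \<le> dev p S j))"
proof -
  have n1: "1 \<le> n" using some_late by auto
  interpret inst n p w T1 T2 k \<mu>
    using pos_p pos_w wspt T1_nonneg T1_T2 mu_nonneg T1_lt_P n1 by unfold_locales auto
  obtain S0 where S0: "feasible n p T1 T2 k S0" using has_feasible by blast
  have "dm (earlier n p T1 S0) (Dmax n p S0)" using LB[OF S0] by blast
  then obtain E D where d: "dm E D" and mn: "\<forall>E' D'. dm E' D' \<longrightarrow> fv E D \<le> fv E' D'"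
    using ex_min by blast
  define S where "S = Can E D"
  have ear: "earlier n p T1 S = E" using earlier_Can[OF d] S_def by simp
  have lat: "later n p T2 S = LL E" using later_Can[OF d] S_def by simp
  have D0: "0 \<le> D" using d unfolding dm_def by simp
  have opt: "optimal n p w T1 T2 k \<mu> S"
    unfolding optimal_def
  proof (intro conjI allI impI)
    show "feasible n p T1 T2 k S" using feas_Can[OF d] S_def by simp
    fix S' assume f': "feasible n p T1 T2 k S'"
    have "cost n p w \<mu> S \<le> fv E D" using cost_Can[OF d] S_def by simp
    also have "fv E D \<le> fv (earlier n p T1 S') (Dmax n p S')" using mn LB[OF f'] by blast
    also have "\<dots> \<le> cost n p w \<mu> S'" using LB[OF f'] by blast
    finally show "cost n p w \<mu> S \<le> cost n p w \<mu> S'" .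
  qed
  have uq: "\<And>g1 g2. gap E D g1 \<Longrightarrow> gap E D g2 \<Longrightarrow> g1 = g2"
  proof (rule ccontr)
    fix g1 g2 assume g1: "gap E D g1" and g2: "gap E D g2" and ne: "g1 \<noteq> g2"
    have "\<exists>E'. dm E' D \<and> fv E' D < fv E D"
    proof (cases "g1 < g2")
      case True then show ?thesis using two_gaps_improve[OF d g1 g2] by blast
    next
      case False then have "g2 < g1" using ne by simp
      then show ?thesis using two_gaps_improve[OF d g2 g1] by blast
    qed
    then show False using mn by force
  qed
  have pa: "\<forall>j\<in>earlier n p T1 S. Cs p S j \<le> Cpi p j"
    unfolding ear unfolding S_def using Cs_Can_E H_le_Cpi[OF D0] by simp
  have pb: "\<forall>a b a' b'. idle_period (earlier n p T1 S) p S a b \<and> idle_period (earlier n p T1 S) p S a' b'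
          \<longrightarrow> a = a' \<and> b = b'"
  proof (intro allI impI)
    fix a b a' b' assume "idle_period (earlier n p T1 S) p S a b \<and> idle_period (earlier n p T1 S) p S a' b'"
    then have i1: "idle_period E p (Can E D) a b" and i2: "idle_period E p (Can E D) a' b'"
      using earlier_Can[OF d] unfolding S_def by auto
    obtain g where g: "gap E D g" "a = H p E D (g-1)" "b = Spi p g - D" using idle_char[OF d i1] by blast
    obtain g' where g': "gap E D g'" "a' = H p E D (g'-1)" "b' = Spi p g' - D" using idle_char[OF d i2] by blast
    have "g = g'" using uq[OF g(1) g'(1)] .
    then show "a = a' \<and> b = b'" using g g' by simp
  qed
  have pcde: "\<forall>a b. idle_period (earlier n p T1 S) p S a b \<longrightarrow>
          (\<forall>j\<in>earlier n p T1 S. S j \<ge> b \<longrightarrow> Cpi p j - Cs p S j = Dmax n p S)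
        \<and> (\<forall>x y z. x \<in> earlier n p T1 S \<and> S x \<ge> b \<and> z \<in> earlier n p T1 S \<and> S z \<ge> b \<and> x \<le> y \<and> y \<le> z
              \<longrightarrow> y \<in> earlier n p T1 S \<and> S y \<ge> b)
        \<and> (\<forall>j\<in>earlier n p T1 S. S j = b \<longrightarrow> Spi p j \<ge> real_of_int T2)"
  proof (intro allI impI)
    fix a b assume "idle_period (earlier n p T1 S) p S a b"
    then have i1: "idle_period E p (Can E D) a b" using earlier_Can[OF d] unfolding S_def by auto
    obtain g where g: "gap E D g" and ga: "a = H p E D (g-1)" and gb: "b = Spi p g - D"
      using idle_char[OF d i1] by blast
    have ug: "\<forall>g'. gap E D g' \<longrightarrow> g' = g" using uq g by blast
    have gE: "g \<in> E" using g unfolding gap_def by simp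
    have g1: "1 \<le> g" using gap_ge1[OF d g] by simp
    have ab: "a < b" using i1 unfolding idle_period_def by simp
    have Hg: "H p E D g = Cpi p g - D" using gap_tight[OF d g order_refl] gE by simp
    have Dm: "Dmax n p S = D"
    proof (rule antisym)
      show "Dmax n p S \<le> D" unfolding S_def using dev_Can[OF d] by (intro Dmax_le) blast
      have "dev p S g = D" unfolding S_def dev_def using Cs_Can_E[OF gE] Hg D0 by simp
      moreover have "g \<in> {1..n}" using gap_ge1[OF d g] by simp
      ultimately show "D \<le> Dmax n p S" using dev_le_Dmax by metis
    qed
    have geg: "\<And>j. j \<in> E \<Longrightarrow> b \<le> S j \<Longrightarrow> g \<le> j"
    proof (rule ccontr)
      fix j assume j: "j \<in> E" "b \<le> S j" "\<not> g \<le> j"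
      then have "H p E D j \<le> H p E D (g-1)" by (intro H_mono) simp
      moreover have "S j \<le> H p E D j" unfolding S_def Can_def using j by simp
      ultimately show False using j ab ga by simp
    qed
    have blk: "\<And>j. j \<in> E \<Longrightarrow> g \<le> j \<Longrightarrow> {g..j} \<subseteq> E \<and> H p E D j = Cpi p j - D \<and> S j = Spi p j - D"
    proof -
      fix j assume j: "j \<in> E" "g \<le> j"
      have "{g..j} \<subseteq> E" "H p E D j = Cpi p j - D" using gap_block[OF d g ug j] by auto
      moreover have "1 \<le> j" using j g1 by simp
      ultimately show "{g..j} \<subseteq> E \<and> H p E D j = Cpi p j - D \<and> S j = Spi p j - D"
        unfolding S_def Can_def using j Cpi_Spi[of j p] by simp
    qed
    show "(\<forall>j\<in>earlier n p T1 S. S j \<ge> b \<longrightarrow> Cpi p j - Cs p S j = Dmax n p S)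
        \<and> (\<forall>x y z. x \<in> earlier n p T1 S \<and> S x \<ge> b \<and> z \<in> earlier n p T1 S \<and> S z \<ge> b \<and> x \<le> y \<and> y \<le> z
              \<longrightarrow> y \<in> earlier n p T1 S \<and> S y \<ge> b)
        \<and> (\<forall>j\<in>earlier n p T1 S. S j = b \<longrightarrow> Spi p j \<ge> real_of_int T2)"
    proof -
    have c1: "\<forall>j\<in>E. S j \<ge> b \<longrightarrow> Cpi p j - Cs p S j = Dmax n p S"
    proof (intro ballI impI)
      fix j assume j: "j \<in> E" "b \<le> S j"
      then have "H p E D j = Cpi p j - D" using blk geg by blast
      then show "Cpi p j - Cs p S j = Dmax n p S" using Cs_Can_E[OF j(1)] Dm S_def by simp
    qed
    have c2: "\<forall>x y z. x \<in> E \<and> S x \<ge> b \<and> z \<in> E \<and> S z \<ge> b \<and> x \<le> y \<and> y \<le> z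
              \<longrightarrow> y \<in> E \<and> S y \<ge> b"
    proof (intro allI impI)
      fix x y z assume xyz: "x \<in> E \<and> b \<le> S x \<and> z \<in> E \<and> b \<le> S z \<and> x \<le> y \<and> y \<le> z"
      then have gx: "g \<le> x" and gz: "g \<le> z" using geg by auto
      then have gy: "g \<le> y" using xyz by simp
      have "{g..z} \<subseteq> E" using blk xyz gz by blast
      then have yE: "y \<in> E" using gy xyz by auto
      then have "S y = Spi p y - D" using blk gy by blast
      moreover have "Spi p g \<le> Spi p y" using gy by (rule Spi_mono)
      ultimately show "y \<in> E \<and> b \<le> S y" using yE gb by simp
    qed
    have c3: "\<forall>j\<in>E. S j = b \<longrightarrow> Spi p j \<ge> real_of_int T2"
    proof (intro ballI impI)
      fix j assume j: "j \<in> E" "S j = b"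
      then have gj: "g \<le> j" using geg by simp
      then have "S j = Spi p j - D" using blk j by blast
      then have "Spi p j = Spi p g" using j gb by simp
      then show "real_of_int T2 \<le> Spi p j" using gap_T2[OF d g] by simp
    qed
    show ?thesis unfolding ear using c1 c2 c3 by blast
    qed
  qed
  have pf: "\<not> idles_after (later n p T2 S) p S (real_of_int T2)"
    unfolding lat unfolding S_def by (rule no_idle_L[OF d])
  have pg: "\<forall>j\<in>later n p T2 S. (\<forall>i\<in>later n p T2 S. S j \<le> S i) \<longrightarrow>
          (\<forall>i\<in>later n p T2 S. dev p S i \<le> dev p S j)"
    unfolding lat unfolding S_def using first_L_max[OF d] by blast
  show ?thesis using opt pa pb pcde pf pg by blast
qed



end
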